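(* Let $S$ be an $E$-unitary inverse semigroup, $A$ a semilattice of groups and $\Lambda=(\alpha,\lambda,f)$ a Sieben twisted $S$-module structure on $A$. Define, for $x\in\mathcal G(S)$: $D_x=\bigsqcup_{s\in x}A_{\alpha(ss^{-1})}$; $\theta_x:D_{x^{-1}}\to D_x$ by $\theta_x(a)=\lambda_s(a)$, where $s\in x$ is the unique element with $\alpha(s^{-1}s)=aa^{-1}$; and for $x,y\in\mathcal G(S)$ the pair $w_{x,y}$ of maps on $D_xD_{xy}$ by $w_{x,y}a=f(s,s^{-1}t)a$, $aw_{x,y}=af(s,s^{-1}t)$, where $s\in x$, $t\in xy$ are the unique elements with $\alpha(ss^{-1})=\alpha(tt^{-1})=aa^{-1}$. Then $\Theta=(\theta,w)$ is a twisted partial action of $\mathcal G(S)$ on $A$. Moreover, the crossed products $A*_\Lambda S$ and $A*_\Theta\mathcal G(S)$ are equivalent as extensions of $A$ by $\mathcal G(S)$.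
   Context: A semilattice of groups is an inverse semigroup $A$ with central idempotents; $A_e=\{a: aa^{-1}=a^{-1}a=e\}$. $\sigma$ is the minimum group congruence on $S$, $\mathcal G(S)=S/\sigma$ (elements are $\sigma$-classes), $\sigma^\natural$ the quotient map; $E$-unitary means $e\le s$, $e\in E(S)$ imply $s\in E(S)$. Relatively invertible endomorphism $\varphi$ of $A$: there are $\bar\varphi\in\mathrm{End}\,A$, $e_\varphi\in E(A)$ with $\bar\varphi\varphi(a)=e_\varphi a$, $\varphi\bar\varphi(a)=\varphi(e_\varphi)a$, $e_\varphi$ the identity of $\bar\varphi(A)$, $\varphi(e_\varphi)$ the identity of $\varphi(A)$. A twisted $S$-module structure is $(\alpha,\lambda,f)$ with $\alpha:E(S)\to E(A)$ an isomorphism, $\lambda_s$ relatively invertible endomorphisms, $f(s,t)\in A_{\alpha(stt^{-1}s^{-1})}$, and (i) $\lambda_e(a)=\alpha(e)a$; (ii) $\lambda_s(\alpha(e))=\alpha(ses^{-1})$; (iii) $\lambda_s\lambda_t(a)=f(s,t)\lambda_{st}(a)f(s,t)^{-1}$; (iv) $f(se,e)=\alpha(ses^{-1})$, $f(e,es)=\alpha(ess^{-1})$; (v) $\lambda_s(f(t,u))f(s,tu)=f(s,t)f(st,u)$; Sieben: additionally $f(s,e)=\alpha(ses^{-1})$, $f(e,s)=\alpha(ess^{-1})$ ($e\in E(S)$). Crossed product $A*_\Lambda S=\{a\delta_s: aa^{-1}=\alpha(ss^{-1})\}$ with $a\delta_s\cdot b\delta_t=a\lambda_s(b)f(s,t)\delta_{st}$,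 regarded as an extension of $A$ by $\mathcal G(S)$ via $a\mapsto a\delta_{\alpha^{-1}(aa^{-1})}$ and $a\delta_s\mapsto\sigma^\natural(s)$. Multipliers of a semigroup $T$: pairs $(L,R)$ of maps with $L(st)=L(s)t$, $R(st)=sR(t)$, $sL(t)=R(s)t$, written $ws=L(s)$, $sw=R(s)$; monoid $\mathcal M(T)$, unit group $\mathcal U(\mathcal M(T))$. A twisted partial action of a group $H$ on $A$ is $(\theta,w)$ with isomorphisms $\theta_x:D_{x^{-1}}\to D_x$ of nonempty ideals and $w_{x,y}\in\mathcal U(\mathcal M(D_xD_{xy}))$, such that (i) $D_x^2=D_x$, $D_xD_y=D_yD_x$; (ii) $D_1=A$, $\theta_1=\mathrm{id}$; (iii) $\theta_x(D_{x^{-1}}D_y)=D_xD_{xy}$; (iv) $\theta_x\theta_y(s)=w_{x,y}\theta_{xy}(s)w_{x,y}^{-1}$ on $D_{y^{-1}}D_{y^{-1}x^{-1}}$; (v) $w_{1,x}=w_{x,1}$ = identity of $D_x$; (vi) $\theta_x(sw_{y,z})w_{x,yz}=\theta_x(s)w_{x,y}w_{xy,z}$ on $D_{x^{-1}}D_yD_{yz}$. Crossed product $A*_\Theta H=\{a\delta_x: a\in D_x\}$ with $a\delta_x\cdot b\delta_y=\theta_x(\theta_x^{-1}(a)b)w_{x,y}\delta_{xy}$, an extension of $A$ by $H$ via $a\mapsto a\delta_1$, $a\delta_x\mapsto x$. Extensions $(U,i,j)$, $(U',i',j')$ of $A$ by a group (i.e. $i$ mono, $j$ epi, $i(A)=j^{-1}(1)$)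 are equivalent if there is an isomorphism $\mu:U\to U'$ with $\mu\circ i=i'$, $j'\circ\mu=j$. *)

theory Defs
  imports "HOL-Algebra.Group"
begin

definition inverse_semigroup :: "('s \<Rightarrow> 's \<Rightarrow> 's) \<Rightarrow> bool" where
  "inverse_semigroup m \<longleftrightarrow> (\<forall>a b c. m (m a b) c = m a (m b c)) \<and>
     (\<forall>a. \<exists>!b. m (m a b) a = a \<and> m (m b a) b = b)"

definition sinv :: "('s \<Rightarrow> 's \<Rightarrow> 's) \<Rightarrow> 's \<Rightarrow> 's" where
  "sinv m a = (THE b. m (m a b) a = a \<and> m (m b a) b = b)"

definition idems :: "('s \<Rightarrow> 's \<Rightarrow> 's) \<Rightarrow> 's set" where
  "idems m = {e. m e e = e}"

definition nat_le :: "('s \<Rightarrow> 's \<Rightarrow> 's) \<Rightarrow> 's \<Rightarrow> 's \<Rightarrow> bool" where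
  "nat_le m s t \<longleftrightarrow> (\<exists>e\<in>idems m. s = m e t)"

definition E_unitary :: "('s \<Rightarrow> 's \<Rightarrow> 's) \<Rightarrow> bool" where
  "E_unitary m \<longleftrightarrow> (\<forall>e s. e \<in> idems m \<and> nat_le m e s \<longrightarrow> s \<in> idems m)"

definition semilattice_of_groups :: "('a \<Rightarrow> 'a \<Rightarrow> 'a) \<Rightarrow> bool" where
  "semilattice_of_groups m \<longleftrightarrow> inverse_semigroup m \<and> (\<forall>e\<in>idems m. \<forall>a. m e a = m a e)"

definition Agrp :: "('a \<Rightarrow> 'a \<Rightarrow> 'a) \<Rightarrow> 'a \<Rightarrow> 'a set" where
  "Agrp m e = {a. m a (sinv m a) = e \<and> m (sinv m a) a = e}"

definition sigma :: "('s \<Rightarrow> 's \<Rightarrow> 's) \<Rightarrow> 's \<Rightarrow> 's \<Rightarrow> bool" where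
  "sigma m s t \<longleftrightarrow> (\<exists>e\<in>idems m. m e s = m e t)"

definition sigma_class :: "('s \<Rightarrow> 's \<Rightarrow> 's) \<Rightarrow> 's \<Rightarrow> 's set" where
  "sigma_class m s = {t. sigma m s t}"

definition GS :: "('s \<Rightarrow> 's \<Rightarrow> 's) \<Rightarrow> 's set monoid" where
  "GS m = \<lparr>carrier = range (sigma_class m),
           mult = (\<lambda>x y. sigma_class m (m (SOME s. s \<in> x) (SOME t. t \<in> y))),
           one = sigma_class m (SOME e. e \<in> idems m)\<rparr>"

definition endo :: "('a \<Rightarrow> 'a \<Rightarrow> 'a) \<Rightarrow> ('a \<Rightarrow> 'a) \<Rightarrow> bool" where
  "endo m \<phi> \<longleftrightarrow> (\<forall>a b. \<phi> (m a b) = m (\<phi> a) (\<phi> b))"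

definition is_identity_of :: "('a \<Rightarrow> 'a \<Rightarrow> 'a) \<Rightarrow> 'a set \<Rightarrow> 'a \<Rightarrow> bool" where
  "is_identity_of m X e \<longleftrightarrow> e \<in> X \<and> (\<forall>b\<in>X. m e b = b \<and> m b e = b)"

definition rel_inv_endo :: "('a \<Rightarrow> 'a \<Rightarrow> 'a) \<Rightarrow> ('a \<Rightarrow> 'a) \<Rightarrow> bool" where
  "rel_inv_endo m \<phi> \<longleftrightarrow> endo m \<phi> \<and>
     (\<exists>\<phi>b e. endo m \<phi>b \<and> e \<in> idems m \<and>
        (\<forall>a. \<phi>b (\<phi> a) = m e a) \<and> (\<forall>a. \<phi> (\<phi>b a) = m (\<phi> e) a) \<and>
        is_identity_of m (range \<phi>b) e \<and> is_identity_of m (range \<phi>) (\<phi> e))"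

definition twisted_module ::
  "('s \<Rightarrow> 's \<Rightarrow> 's) \<Rightarrow> ('a \<Rightarrow> 'a \<Rightarrow> 'a) \<Rightarrow> ('s \<Rightarrow> 'a) \<Rightarrow> ('s \<Rightarrow> 'a \<Rightarrow> 'a) \<Rightarrow> ('s \<Rightarrow> 's \<Rightarrow> 'a) \<Rightarrow> bool" where
  "twisted_module mS mA \<alpha> lam f \<longleftrightarrow>
     bij_betw \<alpha> (idems mS) (idems mA) \<and>
     (\<forall>e\<in>idems mS. \<forall>e'\<in>idems mS. \<alpha> (mS e e') = mA (\<alpha> e) (\<alpha> e')) \<and>
     (\<forall>s. rel_inv_endo mA (lam s)) \<and>
     (\<forall>s t. f s t \<in> Agrp mA (\<alpha> (mS (mS s t) (mS (sinv mS t) (sinv mS s))))) \<and>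
     (\<forall>e\<in>idems mS. \<forall>a. lam e a = mA (\<alpha> e) a) \<and>
     (\<forall>s. \<forall>e\<in>idems mS. lam s (\<alpha> e) = \<alpha> (mS (mS s e) (sinv mS s))) \<and>
     (\<forall>s t a. lam s (lam t a) = mA (mA (f s t) (lam (mS s t) a)) (sinv mA (f s t))) \<and>
     (\<forall>s. \<forall>e\<in>idems mS. f (mS s e) e = \<alpha> (mS (mS s e) (sinv mS s)) \<and>
                        f e (mS e s) = \<alpha> (mS (mS e s) (sinv mS s))) \<and>
     (\<forall>s t u. mA (lam s (f t u)) (f s (mS t u)) = mA (f s t) (f (mS s t) u))"

definition sieben_twisted_module ::
  "('s \<Rightarrow> 's \<Rightarrow> 's) \<Rightarrow> ('a \<Rightarrow> 'a \<Rightarrow> 'a) \<Rightarrow> ('s \<Rightarrow> 'a) \<Rightarrow> ('s \<Rightarrow> 'a \<Rightarrow> 'a) \<Rightarrow> ('s \<Rightarrow> 's \<Rightarrow> 'a) \<Rightarrow> bool" where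
  "sieben_twisted_module mS mA \<alpha> lam f \<longleftrightarrow> twisted_module mS mA \<alpha> lam f \<and>
     (\<forall>s. \<forall>e\<in>idems mS. f s e = \<alpha> (mS (mS s e) (sinv mS s)) \<and>
                        f e s = \<alpha> (mS (mS e s) (sinv mS s)))"

text \<open>Crossed product A *_Lambda S: carrier and multiplication (pairs (a,s) stand for a delta_s)\<close>
definition cpL_carrier :: "('s \<Rightarrow> 's \<Rightarrow> 's) \<Rightarrow> ('a \<Rightarrow> 'a \<Rightarrow> 'a) \<Rightarrow> ('s \<Rightarrow> 'a) \<Rightarrow> ('a \<times> 's) set" where
  "cpL_carrier mS mA \<alpha> = {(a, s). mA a (sinv mA a) = \<alpha> (mS s (sinv mS s))}"

definition cpL_mult ::
  "('s \<Rightarrow> 's \<Rightarrow> 's) \<Rightarrow> ('a \<Rightarrow> 'a \<Rightarrow> 'a) \<Rightarrow> ('s \<Rightarrow> 'a \<Rightarrow> 'a) \<Rightarrow> ('s \<Rightarrow> 's \<Rightarrow> 'a) \<Rightarrow>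
   'a \<times> 's \<Rightarrow> 'a \<times> 's \<Rightarrow> 'a \<times> 's" where
  "cpL_mult mS mA lam f u v = (case u of (a, s) \<Rightarrow> case v of (b, t) \<Rightarrow>
       (mA (mA a (lam s b)) (f s t), mS s t))"

definition cpL_i :: "('s \<Rightarrow> 's \<Rightarrow> 's) \<Rightarrow> ('a \<Rightarrow> 'a \<Rightarrow> 'a) \<Rightarrow> ('s \<Rightarrow> 'a) \<Rightarrow> 'a \<Rightarrow> 'a \<times> 's" where
  "cpL_i mS mA \<alpha> a = (a, the_inv_into (idems mS) \<alpha> (mA a (sinv mA a)))"

definition cpL_j :: "('s \<Rightarrow> 's \<Rightarrow> 's) \<Rightarrow> 'a \<times> 's \<Rightarrow> 's set" where
  "cpL_j mS u = sigma_class mS (snd u)"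

definition setmul :: "('a \<Rightarrow> 'a \<Rightarrow> 'a) \<Rightarrow> 'a set \<Rightarrow> 'a set \<Rightarrow> 'a set" where
  "setmul m X Y = {m x y | x y. x \<in> X \<and> y \<in> Y}"

definition sg_ideal :: "('a \<Rightarrow> 'a \<Rightarrow> 'a) \<Rightarrow> 'a set \<Rightarrow> bool" where
  "sg_ideal m I \<longleftrightarrow> I \<noteq> {} \<and> (\<forall>a\<in>I. \<forall>b. m a b \<in> I \<and> m b a \<in> I)"

definition iso_on :: "('a \<Rightarrow> 'a \<Rightarrow> 'a) \<Rightarrow> ('a \<Rightarrow> 'a) \<Rightarrow> 'a set \<Rightarrow> 'a set \<Rightarrow> bool" where
  "iso_on m \<theta> X Y \<longleftrightarrow> bij_betw \<theta> X Y \<and> (\<forall>a\<in>X. \<forall>b\<in>X. \<theta> (m a b) = m (\<theta> a) (\<theta> b))"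

text \<open>A multiplier of T is a pair (L,R), with w s = L s and s w = R s.\<close>
type_synonym 'a mltp = "('a \<Rightarrow> 'a) \<times> ('a \<Rightarrow> 'a)"

definition multiplier :: "('a \<Rightarrow> 'a \<Rightarrow> 'a) \<Rightarrow> 'a set \<Rightarrow> 'a mltp \<Rightarrow> bool" where
  "multiplier m T w \<longleftrightarrow> (\<forall>s\<in>T. fst w s \<in> T \<and> snd w s \<in> T) \<and>
     (\<forall>s\<in>T. \<forall>t\<in>T. fst w (m s t) = m (fst w s) t \<and> snd w (m s t) = m s (snd w t) \<and>
                     m s (fst w t) = m (snd w s) t)"

text \<open>product in M(T): (w w') s = w (w' s), s (w w') = (s w) w'\<close>
definition mltp_comp :: "'a mltp \<Rightarrow> 'a mltp \<Rightarrow> 'a mltp" where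
  "mltp_comp w w' = (fst w \<circ> fst w', snd w' \<circ> snd w)"

definition mltp_eq :: "'a set \<Rightarrow> 'a mltp \<Rightarrow> 'a mltp \<Rightarrow> bool" where
  "mltp_eq T w w' \<longleftrightarrow> (\<forall>s\<in>T. fst w s = fst w' s \<and> snd w s = snd w' s)"

definition mltp_is_inv :: "('a \<Rightarrow> 'a \<Rightarrow> 'a) \<Rightarrow> 'a set \<Rightarrow> 'a mltp \<Rightarrow> 'a mltp \<Rightarrow> bool" where
  "mltp_is_inv m T w w' \<longleftrightarrow> multiplier m T w' \<and>
     mltp_eq T (mltp_comp w w') (id, id) \<and> mltp_eq T (mltp_comp w' w) (id, id)"

definition unit_multiplier :: "('a \<Rightarrow> 'a \<Rightarrow> 'a) \<Rightarrow> 'a set \<Rightarrow> 'a mltp \<Rightarrow> bool" where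
  "unit_multiplier m T w \<longleftrightarrow> multiplier m T w \<and> (\<exists>w'. mltp_is_inv m T w w')"

definition mltp_inv :: "('a \<Rightarrow> 'a \<Rightarrow> 'a) \<Rightarrow> 'a set \<Rightarrow> 'a mltp \<Rightarrow> 'a mltp" where
  "mltp_inv m T w = (SOME w'. mltp_is_inv m T w w')"

definition twisted_partial_action ::
  "('h, 'z) monoid_scheme \<Rightarrow> ('a \<Rightarrow> 'a \<Rightarrow> 'a) \<Rightarrow> ('h \<Rightarrow> 'a set) \<Rightarrow> ('h \<Rightarrow> 'a \<Rightarrow> 'a) \<Rightarrow>
   ('h \<Rightarrow> 'h \<Rightarrow> 'a mltp) \<Rightarrow> bool" where
  "twisted_partial_action H m D \<theta> w \<longleftrightarrow> group H \<and>
     (\<forall>x\<in>carrier H. sg_ideal m (D x) \<and> iso_on m (\<theta> x) (D (inv\<^bsub>H\<^esub> x)) (D x)) \<and>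
     (\<forall>x\<in>carrier H. \<forall>y\<in>carrier H.
        unit_multiplier m (setmul m (D x) (D (x \<otimes>\<^bsub>H\<^esub> y))) (w x y)) \<and>
     (\<forall>x\<in>carrier H. setmul m (D x) (D x) = D x) \<and>
     (\<forall>x\<in>carrier H. \<forall>y\<in>carrier H. setmul m (D x) (D y) = setmul m (D y) (D x)) \<and>
     D \<one>\<^bsub>H\<^esub> = UNIV \<and> (\<forall>a. \<theta> \<one>\<^bsub>H\<^esub> a = a) \<and>
     (\<forall>x\<in>carrier H. \<forall>y\<in>carrier H.
        \<theta> x ` setmul m (D (inv\<^bsub>H\<^esub> x)) (D y) = setmul m (D x) (D (x \<otimes>\<^bsub>H\<^esub> y))) \<and>
     (\<forall>x\<in>carrier H. \<forall>y\<in>carrier H.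
        \<forall>s\<in>setmul m (D (inv\<^bsub>H\<^esub> y)) (D (inv\<^bsub>H\<^esub> y \<otimes>\<^bsub>H\<^esub> inv\<^bsub>H\<^esub> x)).
          \<theta> x (\<theta> y s) =
          snd (mltp_inv m (setmul m (D x) (D (x \<otimes>\<^bsub>H\<^esub> y))) (w x y))
              (fst (w x y) (\<theta> (x \<otimes>\<^bsub>H\<^esub> y) s))) \<and>
     (\<forall>x\<in>carrier H. mltp_eq (D x) (w \<one>\<^bsub>H\<^esub> x) (id, id) \<and> mltp_eq (D x) (w x \<one>\<^bsub>H\<^esub>) (id, id)) \<and>
     (\<forall>x\<in>carrier H. \<forall>y\<in>carrier H. \<forall>z\<in>carrier H.
        \<forall>s\<in>setmul m (setmul m (D (inv\<^bsub>H\<^esub> x)) (D y)) (D (y \<otimes>\<^bsub>H\<^esub> z)).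
          snd (w x (y \<otimes>\<^bsub>H\<^esub> z)) (\<theta> x (snd (w y z) s)) =
          snd (w (x \<otimes>\<^bsub>H\<^esub> y) z) (snd (w x y) (\<theta> x s)))"

text \<open>Crossed product A *_Theta H (pairs (a,x) stand for a delta_x)\<close>
definition cpT_carrier :: "('h, 'z) monoid_scheme \<Rightarrow> ('h \<Rightarrow> 'a set) \<Rightarrow> ('a \<times> 'h) set" where
  "cpT_carrier H D = {(a, x). x \<in> carrier H \<and> a \<in> D x}"

definition cpT_mult ::
  "('h, 'z) monoid_scheme \<Rightarrow> ('a \<Rightarrow> 'a \<Rightarrow> 'a) \<Rightarrow> ('h \<Rightarrow> 'a set) \<Rightarrow> ('h \<Rightarrow> 'a \<Rightarrow> 'a) \<Rightarrow>
   ('h \<Rightarrow> 'h \<Rightarrow> 'a mltp) \<Rightarrow> 'a \<times> 'h \<Rightarrow> 'a \<times> 'h \<Rightarrow> 'a \<times> 'h" where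
  "cpT_mult H m D \<theta> w u v = (case u of (a, x) \<Rightarrow> case v of (b, y) \<Rightarrow>
      (snd (w x y) (\<theta> x (m (the_inv_into (D (inv\<^bsub>H\<^esub> x)) (\<theta> x) a) b)), x \<otimes>\<^bsub>H\<^esub> y))"

definition cpT_i :: "('h, 'z) monoid_scheme \<Rightarrow> 'a \<Rightarrow> 'a \<times> 'h" where
  "cpT_i H a = (a, \<one>\<^bsub>H\<^esub>)"

definition cpT_j :: "'a \<times> 'h \<Rightarrow> 'h" where
  "cpT_j u = snd u"

definition equiv_ext ::
  "'u set \<Rightarrow> ('u \<Rightarrow> 'u \<Rightarrow> 'u) \<Rightarrow> ('a \<Rightarrow> 'u) \<Rightarrow> ('u \<Rightarrow> 'g) \<Rightarrow>
   'v set \<Rightarrow> ('v \<Rightarrow> 'v \<Rightarrow> 'v) \<Rightarrow> ('a \<Rightarrow> 'v) \<Rightarrow> ('v \<Rightarrow> 'g) \<Rightarrow> bool" where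
  "equiv_ext U mU i j U' mU' i' j' \<longleftrightarrow>
     (\<exists>\<mu>. bij_betw \<mu> U U' \<and> (\<forall>u\<in>U. \<forall>v\<in>U. \<mu> (mU u v) = mU' (\<mu> u) (\<mu> v)) \<and>
          (\<forall>a. \<mu> (i a) = i' a) \<and> (\<forall>u\<in>U. j' (\<mu> u) = j u))"

definition Dmap :: "('s \<Rightarrow> 's \<Rightarrow> 's) \<Rightarrow> ('a \<Rightarrow> 'a \<Rightarrow> 'a) \<Rightarrow> ('s \<Rightarrow> 'a) \<Rightarrow> 's set \<Rightarrow> 'a set" where
  "Dmap mS mA \<alpha> x = (\<Union>s\<in>x. Agrp mA (\<alpha> (mS s (sinv mS s))))"

definition thetamap ::
  "('s \<Rightarrow> 's \<Rightarrow> 's) \<Rightarrow> ('a \<Rightarrow> 'a \<Rightarrow> 'a) \<Rightarrow> ('s \<Rightarrow> 'a) \<Rightarrow> ('s \<Rightarrow> 'a \<Rightarrow> 'a) \<Rightarrow> 's set \<Rightarrow> 'a \<Rightarrow> 'a" where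
  "thetamap mS mA \<alpha> lam x a =
     lam (THE s. s \<in> x \<and> \<alpha> (mS (sinv mS s) s) = mA a (sinv mA a)) a"

definition wfactor ::
  "('s \<Rightarrow> 's \<Rightarrow> 's) \<Rightarrow> ('a \<Rightarrow> 'a \<Rightarrow> 'a) \<Rightarrow> ('s \<Rightarrow> 'a) \<Rightarrow> ('s \<Rightarrow> 's \<Rightarrow> 'a) \<Rightarrow> 's set \<Rightarrow> 's set \<Rightarrow> 'a \<Rightarrow> 'a" where
  "wfactor mS mA \<alpha> f x y a =
     (let s = (THE s. s \<in> x \<and> \<alpha> (mS s (sinv mS s)) = mA a (sinv mA a));
          t = (THE t. t \<in> (x \<otimes>\<^bsub>GS mS\<^esub> y) \<and> \<alpha> (mS t (sinv mS t)) = mA a (sinv mA a))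
      in f s (mS (sinv mS s) t))"

definition wmap ::
  "('s \<Rightarrow> 's \<Rightarrow> 's) \<Rightarrow> ('a \<Rightarrow> 'a \<Rightarrow> 'a) \<Rightarrow> ('s \<Rightarrow> 'a) \<Rightarrow> ('s \<Rightarrow> 's \<Rightarrow> 'a) \<Rightarrow> 's set \<Rightarrow> 's set \<Rightarrow> 'a mltp" where
  "wmap mS mA \<alpha> f x y =
     ((\<lambda>a. mA (wfactor mS mA \<alpha> f x y a) a), (\<lambda>a. mA a (wfactor mS mA \<alpha> f x y a)))"

end

theory Submission
  imports Defs
begin

locale invsem =
  fixes m :: "'s \<Rightarrow> 's \<Rightarrow> 's" (infixl "\<cdot>" 70)
  assumes isg: "inverse_semigroup m"
begin

abbreviation iv where "iv x \<equiv> sinv m x"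
abbreviation EE where "EE \<equiv> idems m"

lemma assoc[simp]: "a \<cdot> b \<cdot> c = a \<cdot> (b \<cdot> c)"
  using isg unfolding inverse_semigroup_def by blast

lemma ex1: "\<exists>!b. a \<cdot> b \<cdot> a = a \<and> b \<cdot> a \<cdot> b = b"
  using isg unfolding inverse_semigroup_def by blast

lemma iv_prop: "a \<cdot> iv a \<cdot> a = a \<and> iv a \<cdot> a \<cdot> iv a = iv a"
  unfolding sinv_def by (rule theI'[OF ex1])

lemma iv1[simp]: "a \<cdot> (iv a \<cdot> a) = a" using iv_prop by simp
lemma iv2[simp]: "iv a \<cdot> (a \<cdot> iv a) = iv a" using iv_prop by simp
lemma iv1'[simp]: "a \<cdot> (iv a \<cdot> (a \<cdot> z)) = a \<cdot> z"
  by (metis assoc iv1)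
lemma iv2'[simp]: "iv a \<cdot> (a \<cdot> (iv a \<cdot> z)) = iv a \<cdot> z"
  by (metis assoc iv2)

lemma iv_unique: "a \<cdot> b \<cdot> a = a \<Longrightarrow> b \<cdot> a \<cdot> b = b \<Longrightarrow> b = iv a"
  using ex1[of a] iv_prop[of a] by blast

lemma iv_iv[simp]: "iv (iv a) = a"
  by (rule sym, rule iv_unique) simp_all

lemma EE_iff: "e \<in> EE \<longleftrightarrow> e \<cdot> e = e" by (simp add: idems_def)

lemma idem_left: "e \<in> EE \<Longrightarrow> e \<cdot> (e \<cdot> z) = e \<cdot> z"
  by (metis EE_iff assoc)

lemma iv_idem: "e \<in> EE \<Longrightarrow> iv e = e"
  by (rule sym, rule iv_unique) (simp_all add: idem_left EE_iff)

lemma idem_comm_aux: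
  assumes e: "e \<in> EE" and f: "f \<in> EE"
  shows "e \<cdot> f \<in> EE"
proof -
  define x where "x = iv (e \<cdot> f)"
  have ee: "e \<cdot> e = e" "f \<cdot> f = f" using e f by (simp_all add: EE_iff)
  have p1: "e \<cdot> f \<cdot> x \<cdot> (e \<cdot> f) = e \<cdot> f" "x \<cdot> (e \<cdot> f) \<cdot> x = x"
    unfolding x_def using iv_prop[of "e \<cdot> f"] by simp_all
  have "f \<cdot> x \<cdot> e = x"
    unfolding x_def
  proof (rule iv_unique)
    show "e \<cdot> f \<cdot> (f \<cdot> iv (e \<cdot> f) \<cdot> e) \<cdot> (e \<cdot> f) = e \<cdot> f"
      using p1(1) ee unfolding x_def by (simp add: idem_left e f)
    show "f \<cdot> iv (e \<cdot> f) \<cdot> e \<cdot> (e \<cdot> f) \<cdot> (f \<cdot> iv (e \<cdot> f) \<cdot> e) = f \<cdot> iv (e \<cdot> f) \<cdot> e"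
      using p1(2) ee unfolding x_def by (simp add: idem_left e f) (metis assoc)
  qed
  then have xx: "x \<cdot> x = x"
    by (metis assoc p1(2))
  then have "iv x = x" by (simp add: iv_idem EE_iff)
  moreover have "e \<cdot> f = iv x"
    by (rule iv_unique) (use p1 in simp_all)
  ultimately show ?thesis using xx by (simp add: EE_iff)
qed

lemma idem_comm:
  assumes e: "e \<in> EE" and f: "f \<in> EE"
  shows "e \<cdot> f = f \<cdot> e"
proof -
  have ef: "e \<cdot> f \<in> EE" and fe: "f \<cdot> e \<in> EE" using idem_comm_aux e f by auto
  have ee: "e \<cdot> e = e" "f \<cdot> f = f" using e f by (simp_all add: EE_iff)
  have "f \<cdot> e = iv (e \<cdot> f)"
  proof (rule iv_unique)
    have "e \<cdot> f \<cdot> (f \<cdot> e) \<cdot> (e \<cdot> f) = (e \<cdot> f) \<cdot> (e \<cdot> f)"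
      using ee by (simp add: idem_left e f)
    then show "e \<cdot> f \<cdot> (f \<cdot> e) \<cdot> (e \<cdot> f) = e \<cdot> f" using ef by (simp add: EE_iff)
    have "f \<cdot> e \<cdot> (e \<cdot> f) \<cdot> (f \<cdot> e) = (f \<cdot> e) \<cdot> (f \<cdot> e)"
      using ee by (simp add: idem_left e f)
    then show "f \<cdot> e \<cdot> (e \<cdot> f) \<cdot> (f \<cdot> e) = f \<cdot> e" using fe by (simp add: EE_iff)
  qed
  then show ?thesis using iv_idem[OF ef] by simp
qed

lemma EE_mult: "e \<in> EE \<Longrightarrow> f \<in> EE \<Longrightarrow> e \<cdot> f \<in> EE"
  by (rule idem_comm_aux)

lemma idem_comm': "e \<in> EE \<Longrightarrow> f \<in> EE \<Longrightarrow> e \<cdot> (f \<cdot> z) = f \<cdot> (e \<cdot> z)"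
  by (metis assoc idem_comm)

lemma rr_E[simp]: "a \<cdot> iv a \<in> EE"
  by (simp add: EE_iff)
lemma ll_E[simp]: "iv a \<cdot> a \<in> EE"
  by (simp add: EE_iff)

lemma iv_mult: "iv (a \<cdot> b) = iv b \<cdot> iv a"
proof -
  have c: "b \<cdot> iv b \<cdot> (iv a \<cdot> a) = iv a \<cdot> a \<cdot> (b \<cdot> iv b)"
    by (rule idem_comm) simp_all
  show ?thesis
  proof (rule sym, rule iv_unique)
    have "a \<cdot> b \<cdot> (iv b \<cdot> iv a) \<cdot> (a \<cdot> b) = a \<cdot> ((b \<cdot> iv b) \<cdot> (iv a \<cdot> a)) \<cdot> b" by simp
    also have "\<dots> = a \<cdot> b" using c by simp
    finally show "a \<cdot> b \<cdot> (iv b \<cdot> iv a) \<cdot> (a \<cdot> b) = a \<cdot> b" .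
    have "iv b \<cdot> iv a \<cdot> (a \<cdot> b) \<cdot> (iv b \<cdot> iv a) = iv b \<cdot> ((iv a \<cdot> a) \<cdot> (b \<cdot> iv b)) \<cdot> iv a" by simp
    also have "\<dots> = iv b \<cdot> iv a" using c[symmetric] by simp
    finally show "iv b \<cdot> iv a \<cdot> (a \<cdot> b) \<cdot> (iv b \<cdot> iv a) = iv b \<cdot> iv a" .
  qed
qed

lemma conj_E: "e \<in> EE \<Longrightarrow> s \<cdot> e \<cdot> iv s \<in> EE"
proof -
  assume e: "e \<in> EE"
  have "s \<cdot> e \<cdot> iv s \<cdot> (s \<cdot> e \<cdot> iv s) = s \<cdot> (e \<cdot> (iv s \<cdot> s) \<cdot> e) \<cdot> iv s" by simp
  also have "\<dots> = s \<cdot> ((iv s \<cdot> s) \<cdot> (e \<cdot> e)) \<cdot> iv s" using idem_comm[OF e ll_E] by simp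
  also have "\<dots> = s \<cdot> e \<cdot> iv s" using e by (simp add: EE_iff)
  finally show ?thesis by (simp add: EE_iff del: assoc)
qed

end

context invsem begin

lemma rr_idem[simp]: "a \<cdot> iv a \<cdot> (a \<cdot> iv a) = a \<cdot> iv a" by simp
lemma comm_rl: "a \<cdot> iv a \<cdot> (iv b \<cdot> b) = iv b \<cdot> b \<cdot> (a \<cdot> iv a)" by (rule idem_comm) simp_all


definition sg where "sg s t \<longleftrightarrow> sigma m s t"

lemma sg_def': "sg s t \<longleftrightarrow> (\<exists>e\<in>EE. e \<cdot> s = e \<cdot> t)" by (simp add: sg_def sigma_def)

lemma sg_refl[simp]: "sg s s" unfolding sg_def' using rr_E[of s] by blast
lemma sg_sym: "sg s t \<Longrightarrow> sg t s" by (metis sg_def')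
lemma sg_trans: "sg s t \<Longrightarrow> sg t u \<Longrightarrow> sg s u"
proof -
  assume "sg s t" "sg t u"
  then obtain e f where e: "e \<in> EE" "e \<cdot> s = e \<cdot> t" and f: "f \<in> EE" "f \<cdot> t = f \<cdot> u"
    by (auto simp: sg_def')
  have "f \<cdot> e \<cdot> s = f \<cdot> e \<cdot> u"
    using e f by (simp) (metis idem_comm')
  then show ?thesis using EE_mult[OF f(1) e(1)] unfolding sg_def' by blast
qed

lemma sg_mult_right: "sg s t \<Longrightarrow> sg (s \<cdot> u) (t \<cdot> u)"
  unfolding sg_def' by (metis assoc)

lemma sg_mult_left: "sg s t \<Longrightarrow> sg (u \<cdot> s) (u \<cdot> t)"
proof -
  assume "sg s t"
  then obtain e where e: "e \<in> EE" "e \<cdot> s = e \<cdot> t" by (auto simp: sg_def')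
  have k: "u \<cdot> e \<cdot> iv u \<cdot> (u \<cdot> z) = u \<cdot> (e \<cdot> z)" for z
  proof -
    have "u \<cdot> e \<cdot> iv u \<cdot> (u \<cdot> z) = u \<cdot> (e \<cdot> (iv u \<cdot> u) \<cdot> z)" by simp
    also have "\<dots> = u \<cdot> ((iv u \<cdot> u) \<cdot> e \<cdot> z)" using idem_comm[OF e(1) ll_E] by simp
    finally show ?thesis by simp
  qed
  have "u \<cdot> e \<cdot> iv u \<cdot> (u \<cdot> s) = u \<cdot> e \<cdot> iv u \<cdot> (u \<cdot> t)" using e(2) by (simp only: k)
  then show ?thesis using conj_E[OF e(1), of u] unfolding sg_def' by blast
qed

lemma sg_mult: "sg s t \<Longrightarrow> sg s' t' \<Longrightarrow> sg (s \<cdot> s') (t \<cdot> t')"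
  by (meson sg_mult_left sg_mult_right sg_trans)

lemma sg_idem_left: "e \<in> EE \<Longrightarrow> sg s (e \<cdot> s)"
  unfolding sg_def' by (metis idem_left)

lemma sg_idem_right: "e \<in> EE \<Longrightarrow> sg s (s \<cdot> e)"
proof -
  assume e: "e \<in> EE"
  have "s \<cdot> e \<cdot> iv s \<cdot> s = s \<cdot> e" using idem_comm[OF e ll_E] by simp
  moreover have "s \<cdot> e \<cdot> iv s \<cdot> (s \<cdot> e) = s \<cdot> e" using idem_comm[OF e ll_E] e
    by simp (metis EE_iff assoc iv1)
  ultimately show ?thesis using conj_E[OF e, of s] unfolding sg_def' by (metis assoc)
qed

lemma sg_iv: "sg s t \<Longrightarrow> sg (iv s) (iv t)"
proof -
  assume "sg s t"
  then obtain e where e: "e \<in> EE" "e \<cdot> s = e \<cdot> t" by (auto simp: sg_def')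
  have "iv (e \<cdot> s) = iv (e \<cdot> t)" using e(2) by simp
  then have r: "iv s \<cdot> e = iv t \<cdot> e" by (simp add: iv_mult iv_idem[OF e(1)])
  define g where "g = iv s \<cdot> e \<cdot> s"
  have gE: "g \<in> EE" unfolding g_def using conj_E[OF e(1), of "iv s"] by simp
  have 1: "g \<cdot> iv s = iv s \<cdot> e"
  proof -
    have "g \<cdot> iv s = iv s \<cdot> (e \<cdot> (s \<cdot> iv s))" by (simp add: g_def)
    also have "\<dots> = iv s \<cdot> (s \<cdot> iv s \<cdot> e)" using idem_comm[OF e(1) rr_E] by simp
    finally show ?thesis by simp
  qed
  have 2: "g \<cdot> iv t = iv s \<cdot> e"
  proof -
    have "g \<cdot> iv t = iv s \<cdot> e \<cdot> (e \<cdot> s) \<cdot> iv t" using e by (simp add: g_def idem_left)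
    also have "\<dots> = iv t \<cdot> e \<cdot> (e \<cdot> t) \<cdot> iv t" using e(2) r by (simp del: assoc)
    also have "\<dots> = iv t \<cdot> (e \<cdot> (t \<cdot> iv t))" using e by (simp add: idem_left)
    also have "\<dots> = iv t \<cdot> (t \<cdot> iv t \<cdot> e)" using idem_comm[OF e(1) rr_E] by simp
    also have "\<dots> = iv t \<cdot> e" by simp
    finally show ?thesis using r by simp
  qed
  show ?thesis using gE 1 2 unfolding sg_def' by metis
qed

end

locale eusg = invsem +
  assumes eu: "E_unitary m"
begin

lemma eu': "e \<in> EE \<Longrightarrow> f \<in> EE \<Longrightarrow> f \<cdot> s = e \<Longrightarrow> s \<in> EE"
  using eu unfolding E_unitary_def nat_le_def by blast

lemma sg_ll: "sg s t \<Longrightarrow> iv s \<cdot> t \<in> EE"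
proof -
  assume "sg s t"
  then obtain e where e: "e \<in> EE" "e \<cdot> s = e \<cdot> t" by (auto simp: sg_def')
  define g where "g = iv s \<cdot> e \<cdot> t"
  have g': "g = iv s \<cdot> e \<cdot> s" using e by (simp add: g_def)
  have gE: "g \<in> EE" unfolding g' using conj_E[OF e(1), of "iv s"] by simp
  have "g \<cdot> (iv s \<cdot> t) = iv s \<cdot> (e \<cdot> (s \<cdot> iv s) \<cdot> t)" by (simp add: g')
  also have "\<dots> = iv s \<cdot> (s \<cdot> iv s \<cdot> e \<cdot> t)" using idem_comm[OF e(1) rr_E] by simp
  also have "\<dots> = g" by (simp add: g_def)
  finally show ?thesis using eu'[OF gE gE] by blast
qed

lemma sg_rr: "sg s t \<Longrightarrow> s \<cdot> iv t \<in> EE"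
  using sg_ll[OF sg_iv, of s t] by simp

lemma uniq_r: "sg s t \<Longrightarrow> s \<cdot> iv s = t \<cdot> iv t \<Longrightarrow> s = t"
proof -
  assume st: "sg s t" and r: "s \<cdot> iv s = t \<cdot> iv t"
  define g where "g = iv t \<cdot> s"
  have gE: "g \<in> EE" unfolding g_def using sg_ll[OF sg_sym[OF st]] .
  have h: "iv s \<cdot> t = g" using iv_idem[OF gE] by (simp add: g_def iv_mult)
  have 1: "s = t \<cdot> g"
  proof -
    have "s = s \<cdot> iv s \<cdot> s" by simp
    also have "\<dots> = t \<cdot> g" using r by (simp add: g_def del: assoc) (simp)
    finally show ?thesis .
  qed
  have 2: "t = s \<cdot> g"
  proof -
    have "t = t \<cdot> iv t \<cdot> t" by simp
    also have "\<dots> = s \<cdot> iv s \<cdot> t" by (simp only: r)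
    also have "\<dots> = s \<cdot> g" using h by simp
    finally show ?thesis .
  qed
  have "s = s \<cdot> g" using 1 2 gE by (simp add: EE_iff)
  then show ?thesis using 2 by simp
qed

lemma uniq_l: "sg s t \<Longrightarrow> iv s \<cdot> s = iv t \<cdot> t \<Longrightarrow> s = t"
proof -
  assume a: "sg s t" "iv s \<cdot> s = iv t \<cdot> t"
  have "iv s = iv t" using uniq_r[OF sg_iv[OF a(1)]] a(2) by simp
  then have "iv (iv s) = iv (iv t)" by simp
  then show ?thesis by simp
qed

lemma E1: "sg s t \<Longrightarrow> s \<cdot> iv s \<cdot> (t \<cdot> iv t) = s \<cdot> iv t"
proof -
  assume st: "sg s t"
  define h where "h = s \<cdot> iv t"
  define k where "k = iv s \<cdot> t"
  have hE: "h \<in> EE" unfolding h_def using sg_rr[OF st] .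
  have kE: "k \<in> EE" unfolding k_def using sg_ll[OF st] .
  have kk: "k = iv s \<cdot> (t \<cdot> (iv t \<cdot> s))"
  proof -
    have "k = k \<cdot> iv k" using kE iv_idem[OF kE] by (simp add: EE_iff)
    then show ?thesis by (simp add: k_def iv_mult)
  qed
  have a: "s \<cdot> iv s \<cdot> (t \<cdot> iv t) = s \<cdot> iv s \<cdot> (t \<cdot> iv t) \<cdot> h"
  proof -
    have "s \<cdot> iv s \<cdot> (t \<cdot> iv t) = s \<cdot> k \<cdot> iv t" by (simp add: k_def)
    also have "\<dots> = s \<cdot> iv s \<cdot> (t \<cdot> iv t) \<cdot> h" by (subst kk) (simp add: h_def)
    finally show ?thesis .
  qed
  have b: "h = s \<cdot> iv s \<cdot> (t \<cdot> iv t) \<cdot> h"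
  proof -
    have h1: "h = s \<cdot> iv s \<cdot> h" by (simp add: h_def)
    have h2: "h = h \<cdot> (t \<cdot> iv t)" by (simp add: h_def)
    have "h = s \<cdot> iv s \<cdot> (h \<cdot> (t \<cdot> iv t))" using h1 h2 by simp
    also have "\<dots> = s \<cdot> iv s \<cdot> (t \<cdot> iv t \<cdot> h)" using idem_comm[OF hE rr_E] by simp
    finally show ?thesis by simp
  qed
  have "s \<cdot> iv s \<cdot> (t \<cdot> iv t) = h" using a b by (metis)
  then show ?thesis by (simp add: h_def del: assoc)
qed

end

context eusg begin

abbreviation cls where "cls s \<equiv> sigma_class m s"
abbreviation GG where "GG \<equiv> GS m"

lemma mem_cls: "t \<in> cls s \<longleftrightarrow> sg s t" by (simp add: sigma_class_def sg_def)

lemma cls_eq: "cls s = cls t \<longleftrightarrow> sg s t"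
  unfolding set_eq_iff mem_cls by (meson sg_refl sg_sym sg_trans)

lemma carrier_GG: "carrier GG = range cls" by (simp add: GS_def)

lemma cls_in[simp]: "cls s \<in> carrier GG" by (simp add: carrier_GG)

lemma self_in_cls[simp]: "s \<in> cls s" by (simp add: mem_cls)

lemma in_class: "x \<in> carrier GG \<Longrightarrow> s \<in> x \<Longrightarrow> x = cls s"
  by (metis carrier_GG cls_eq imageE mem_cls)

lemma class_ne: "x \<in> carrier GG \<Longrightarrow> \<exists>s. s \<in> x"
  by (metis carrier_GG imageE self_in_cls)

lemma same_class: "x \<in> carrier GG \<Longrightarrow> s \<in> x \<Longrightarrow> t \<in> x \<Longrightarrow> sg s t"
  by (metis in_class mem_cls)

lemma GG_mult: "cls s \<otimes>\<^bsub>GG\<^esub> cls t = cls (s \<cdot> t)"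
proof -
  have a: "(SOME u. u \<in> cls s) \<in> cls s" by (rule someI[of _ s]) simp
  have b: "(SOME u. u \<in> cls t) \<in> cls t" by (rule someI[of _ t]) simp
  show ?thesis using a b unfolding GS_def
    by (simp add: cls_eq mem_cls) (meson sg_mult sg_sym)
qed

lemma cls_E: "e \<in> EE \<Longrightarrow> cls e = EE"
proof -
  assume e: "e \<in> EE"
  have "sg e t \<longleftrightarrow> t \<in> EE" for t
  proof
    assume "sg e t"
    then obtain f where f: "f \<in> EE" "f \<cdot> e = f \<cdot> t" by (auto simp: sg_def')
    have "f \<cdot> e \<in> EE" using EE_mult f e by blast
    then show "t \<in> EE" using eu'[OF _ f(1)] f(2) by metis
  next
    assume t: "t \<in> EE"
    have "e \<cdot> t \<cdot> e = e \<cdot> t \<cdot> t"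
      using e t by (simp add: idem_comm'[OF e t] idem_left) (metis EE_iff assoc idem_comm)
    then show "sg e t" using EE_mult[OF e t] unfolding sg_def' by (metis assoc)
  qed
  then show ?thesis by (auto simp: mem_cls)
qed

lemma GG_one: "\<one>\<^bsub>GG\<^esub> = EE"
proof -
  have "(SOME e. e \<in> EE) \<in> EE" by (rule someI[of _ "x \<cdot> iv x"]) simp
  then show ?thesis by (simp add: GS_def cls_E)
qed

lemma GG_one_cls: "e \<in> EE \<Longrightarrow> cls e = \<one>\<^bsub>GG\<^esub>"
  by (simp add: GG_one cls_E)

lemma group_GG: "group GG"
proof (rule groupI)
  fix x y z assume x: "x \<in> carrier GG" and y: "y \<in> carrier GG" and z: "z \<in> carrier GG"
  then obtain a b c where "x = cls a" "y = cls b" "z = cls c" by (auto simp: carrier_GG)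
  then show "x \<otimes>\<^bsub>GG\<^esub> y \<in> carrier GG" "x \<otimes>\<^bsub>GG\<^esub> y \<otimes>\<^bsub>GG\<^esub> z = x \<otimes>\<^bsub>GG\<^esub> (y \<otimes>\<^bsub>GG\<^esub> z)"
    by (simp_all add: GG_mult)
next
  show "\<one>\<^bsub>GG\<^esub> \<in> carrier GG" using GG_one_cls[OF rr_E[of x]] cls_in by metis
next
  fix x assume "x \<in> carrier GG"
  then obtain a where a: "x = cls a" by (auto simp: carrier_GG)
  have "\<one>\<^bsub>GG\<^esub> \<otimes>\<^bsub>GG\<^esub> x = cls (a \<cdot> iv a \<cdot> a)"
    unfolding a GG_one_cls[OF rr_E[of a], symmetric] GG_mult by simp
  then show "\<one>\<^bsub>GG\<^esub> \<otimes>\<^bsub>GG\<^esub> x = x" using a by simp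
  have "cls (iv a) \<otimes>\<^bsub>GG\<^esub> x = \<one>\<^bsub>GG\<^esub>"
    unfolding a GG_mult using GG_one_cls[OF ll_E[of a]] by simp
  then show "\<exists>y\<in>carrier GG. y \<otimes>\<^bsub>GG\<^esub> x = \<one>\<^bsub>GG\<^esub>" using cls_in by blast
qed

lemma GG_inv: "inv\<^bsub>GG\<^esub> (cls s) = cls (iv s)"
  by (rule group.inv_equality[OF group_GG]) (simp_all add: GG_mult GG_one_cls)

lemma mult_in: "x \<in> carrier GG \<Longrightarrow> y \<in> carrier GG \<Longrightarrow> s \<in> x \<Longrightarrow> t \<in> y \<Longrightarrow> s \<cdot> t \<in> x \<otimes>\<^bsub>GG\<^esub> y"
  by (metis GG_mult in_class self_in_cls)

lemma inv_in: "x \<in> carrier GG \<Longrightarrow> s \<in> x \<Longrightarrow> iv s \<in> inv\<^bsub>GG\<^esub> x"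
  by (metis GG_inv in_class self_in_cls)

lemma idl_in: "x \<in> carrier GG \<Longrightarrow> s \<in> x \<Longrightarrow> e \<in> EE \<Longrightarrow> e \<cdot> s \<in> x"
  by (metis in_class mem_cls sg_idem_left)

lemma idr_in: "x \<in> carrier GG \<Longrightarrow> s \<in> x \<Longrightarrow> e \<in> EE \<Longrightarrow> s \<cdot> e \<in> x"
  by (metis in_class mem_cls sg_idem_right)

lemma uniq_r_cls: "x \<in> carrier GG \<Longrightarrow> s \<in> x \<Longrightarrow> t \<in> x \<Longrightarrow> s \<cdot> iv s = t \<cdot> iv t \<Longrightarrow> s = t"
  using same_class uniq_r by blast
lemma uniq_l_cls: "x \<in> carrier GG \<Longrightarrow> s \<in> x \<Longrightarrow> t \<in> x \<Longrightarrow> iv s \<cdot> s = iv t \<cdot> t \<Longrightarrow> s = t"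
  using same_class uniq_l by blast

end

context invsem begin

lemma endo_iv:
  assumes "endo m \<phi>" shows "\<phi> (iv a) = iv (\<phi> a)"
proof (rule iv_unique)
  have h: "\<phi> (x \<cdot> y) = \<phi> x \<cdot> \<phi> y" for x y using assms by (simp add: endo_def)
  show "\<phi> a \<cdot> \<phi> (iv a) \<cdot> \<phi> a = \<phi> a" by (metis h iv_prop)
  show "\<phi> (iv a) \<cdot> \<phi> a \<cdot> \<phi> (iv a) = \<phi> (iv a)" by (metis h iv_prop)
qed

lemma endo_E: "endo m \<phi> \<Longrightarrow> e \<in> EE \<Longrightarrow> \<phi> e \<in> EE"
  by (metis EE_iff endo_def)

end

locale cliff = invsem +
  assumes central: "e \<in> EE \<Longrightarrow> e \<cdot> a = a \<cdot> e"
begin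

definition eps where "eps a = a \<cdot> iv a"

lemma eps_E[simp]: "eps a \<in> EE" by (simp add: eps_def)

lemma central': "e \<in> EE \<Longrightarrow> e \<cdot> (a \<cdot> z) = a \<cdot> (e \<cdot> z)"
  by (metis assoc central)

lemma eps_sym: "iv a \<cdot> a = eps a"
proof -
  have 1: "a \<cdot> iv a = a \<cdot> iv a \<cdot> (iv a \<cdot> a)"
  proof -
    have "a \<cdot> iv a = a \<cdot> (iv a \<cdot> a) \<cdot> iv a" by simp
    also have "\<dots> = a \<cdot> iv a \<cdot> (iv a \<cdot> a)" using central[OF ll_E[of a], of "iv a"] by simp
    finally show ?thesis .
  qed
  have 2: "iv a \<cdot> a = iv a \<cdot> a \<cdot> (a \<cdot> iv a)"
  proof -
    have "iv a \<cdot> a = iv a \<cdot> (a \<cdot> iv a) \<cdot> a" by simp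
    also have "\<dots> = iv a \<cdot> a \<cdot> (a \<cdot> iv a)" using central[OF rr_E[of a], of "a"] by simp
    finally show ?thesis .
  qed
  show ?thesis using 1 2 idem_comm[OF rr_E[of a] ll_E[of a]] unfolding eps_def by metis
qed

lemma eps_left[simp]: "eps a \<cdot> a = a" by (simp add: eps_def)
lemma eps_right[simp]: "a \<cdot> eps a = a" by (simp add: eps_sym[symmetric])
lemma eps_left'[simp]: "eps a \<cdot> (a \<cdot> z) = a \<cdot> z" by (metis assoc eps_left)
lemma eps_right'[simp]: "a \<cdot> (eps a \<cdot> z) = a \<cdot> z" by (metis assoc eps_right)

lemma eps_idem: "e \<in> EE \<Longrightarrow> eps e = e" by (simp add: eps_def iv_idem EE_iff)

lemma eps_iv[simp]: "eps (iv a) = eps a" by (simp add: eps_def eps_sym)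

lemma eps_mult: "eps (a \<cdot> b) = eps a \<cdot> eps b"
proof -
  have "eps (a \<cdot> b) = a \<cdot> (b \<cdot> iv b) \<cdot> iv a" by (simp add: eps_def iv_mult)
  also have "\<dots> = (b \<cdot> iv b) \<cdot> (a \<cdot> iv a)" using central'[OF rr_E[of b], of a "iv a"] by simp
  also have "\<dots> = eps a \<cdot> eps b" using idem_comm[OF rr_E[of b] rr_E[of a]] by (simp add: eps_def)
  finally show ?thesis .
qed

lemma Agrp_iff: "a \<in> Agrp m e \<longleftrightarrow> eps a = e"
  by (auto simp: Agrp_def eps_def eps_sym[unfolded eps_def])

lemma iv_r[simp]: "a \<cdot> iv a = eps a" by (simp add: eps_def)
lemma iv_l[simp]: "iv a \<cdot> a = eps a" by (simp add: eps_sym)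
lemma iv_r'[simp]: "a \<cdot> (iv a \<cdot> z) = eps a \<cdot> z" by (metis assoc iv_r)
lemma iv_l'[simp]: "iv a \<cdot> (a \<cdot> z) = eps a \<cdot> z" by (metis assoc iv_l)

end

locale main = S: eusg mS + A: cliff mA
  for mS :: "'s \<Rightarrow> 's \<Rightarrow> 's" (infixl "\<cdot>" 70) and mA :: "'a \<Rightarrow> 'a \<Rightarrow> 'a" (infixl "\<odot>" 70) +
  fixes \<alpha> :: "'s \<Rightarrow> 'a" and lam :: "'s \<Rightarrow> 'a \<Rightarrow> 'a" and f :: "'s \<Rightarrow> 's \<Rightarrow> 'a"
  assumes sieb: "sieben_twisted_module mS mA \<alpha> lam f"
begin

abbreviation si where "si \<equiv> sinv mS"
abbreviation ai where "ai \<equiv> sinv mA"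
abbreviation ES where "ES \<equiv> idems mS"
abbreviation EA where "EA \<equiv> idems mA"
abbreviation eps where "eps \<equiv> A.eps"

lemma tw: "twisted_module mS mA \<alpha> lam f" using sieb by (simp add: sieben_twisted_module_def)

lemmas twp = tw[unfolded twisted_module_def]
lemmas tw2 = twp[THEN conjunct2]
lemmas tw3 = tw2[THEN conjunct2]
lemmas tw4 = tw3[THEN conjunct2]
lemmas tw5 = tw4[THEN conjunct2]
lemmas tw6 = tw5[THEN conjunct2]
lemmas tw7 = tw6[THEN conjunct2]
lemmas tw8 = tw7[THEN conjunct2]
lemmas tw9 = tw8[THEN conjunct2]
lemmas sbp = sieb[unfolded sieben_twisted_module_def, THEN conjunct2]

lemma a_bij: "bij_betw \<alpha> ES EA" using twp by (rule conjunct1)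
lemma a_hom: "e \<in> ES \<Longrightarrow> e' \<in> ES \<Longrightarrow> \<alpha> (e \<cdot> e') = \<alpha> e \<odot> \<alpha> e'"
  using tw2[THEN conjunct1] by blast
lemma lam_rel: "rel_inv_endo mA (lam s)" using tw3[THEN conjunct1] by blast
lemma f_grp: "eps (f s t) = \<alpha> (s \<cdot> t \<cdot> (si t \<cdot> si s))"
  using tw4[THEN conjunct1] by (simp add: A.Agrp_iff)
lemma lam_E: "e \<in> ES \<Longrightarrow> lam e a = \<alpha> e \<odot> a" using tw5[THEN conjunct1] by blast
lemma lam_a: "e \<in> ES \<Longrightarrow> lam s (\<alpha> e) = \<alpha> (s \<cdot> e \<cdot> si s)" using tw6[THEN conjunct1] by blast
lemma lam_comp: "lam s (lam t a) = f s t \<odot> lam (s \<cdot> t) a \<odot> ai (f s t)"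
  using tw7[THEN conjunct1] by blast
lemma cocycle: "lam s (f t u) \<odot> f s (t \<cdot> u) = f s t \<odot> f (s \<cdot> t) u"
  using tw9 by blast
lemma f_se: "e \<in> ES \<Longrightarrow> f s e = \<alpha> (s \<cdot> e \<cdot> si s)"
  using sbp by blast
lemma f_es: "e \<in> ES \<Longrightarrow> f e s = \<alpha> (e \<cdot> s \<cdot> si s)"
  using sbp by blast

lemma a_E[simp]: "e \<in> ES \<Longrightarrow> \<alpha> e \<in> EA" using a_bij by (auto simp: bij_betw_def)
lemma a_inj: "e \<in> ES \<Longrightarrow> e' \<in> ES \<Longrightarrow> \<alpha> e = \<alpha> e' \<Longrightarrow> e = e'"
  using a_bij by (auto simp: bij_betw_def inj_on_def)

definition ea where "ea a = the_inv_into ES \<alpha> (eps a)"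

lemma ea_E[simp]: "ea a \<in> ES"
  unfolding ea_def using a_bij A.eps_E[of a]
  by (intro the_inv_into_into) (auto simp: bij_betw_def)
lemma a_ea[simp]: "\<alpha> (ea a) = eps a"
  unfolding ea_def using a_bij A.eps_E[of a]
  by (intro f_the_inv_into_f) (auto simp: bij_betw_def)
lemma ea_iff: "e \<in> ES \<Longrightarrow> eps a = \<alpha> e \<longleftrightarrow> ea a = e"
  using a_inj[of "ea a" e] by auto
lemma ea_a[simp]: "e \<in> ES \<Longrightarrow> ea (\<alpha> e) = e"
  using ea_iff[of e "\<alpha> e"] A.eps_idem[OF a_E[of e]] by simp
lemma EA_a: "g \<in> EA \<Longrightarrow> \<exists>e\<in>ES. g = \<alpha> e"
  using a_bij by (auto simp: bij_betw_def)

lemma ea_mult: "ea (a \<odot> b) = ea a \<cdot> ea b"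
  by (rule ea_iff[THEN iffD1]) (simp_all add: A.eps_mult a_hom S.EE_mult)

lemma lam_endo: "endo mA (lam s)" using lam_rel by (simp add: rel_inv_endo_def)
lemma lam_mult: "lam s (a \<odot> b) = lam s a \<odot> lam s b" using lam_endo by (simp add: endo_def)
lemma lam_iv: "lam s (ai a) = ai (lam s a)" using A.endo_iv[OF lam_endo] .

lemma eps_lam: "eps (lam s a) = \<alpha> (s \<cdot> ea a \<cdot> si s)"
proof -
  have "eps (lam s a) = lam s (eps a)" by (simp add: A.eps_def lam_mult lam_iv del: A.iv_r A.iv_r')
  also have "\<dots> = \<alpha> (s \<cdot> ea a \<cdot> si s)" using lam_a[OF ea_E[of a], of s] by simp
  finally show ?thesis .
qed

lemma a_idem[simp]: "e \<in> ES \<Longrightarrow> \<alpha> e \<odot> \<alpha> e = \<alpha> e"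
  using a_E[of e] by (simp add: A.EE_iff)
lemma a_idem'[simp]: "e \<in> ES \<Longrightarrow> \<alpha> e \<odot> (\<alpha> e \<odot> z) = \<alpha> e \<odot> z"
  by (rule A.idem_left[OF a_E])

lemma a_absorb: "e \<in> ES \<Longrightarrow> g \<in> ES \<Longrightarrow> e \<cdot> g = g \<Longrightarrow> eps c = \<alpha> g \<Longrightarrow> \<alpha> e \<odot> c = c"
proof -
  assume h: "e \<in> ES" "g \<in> ES" "e \<cdot> g = g" "eps c = \<alpha> g"
  have c: "c = \<alpha> g \<odot> c" using h(4) A.eps_left[of c] by simp
  have "\<alpha> e \<odot> c = \<alpha> e \<odot> (\<alpha> g \<odot> c)" using c by simp
  also have "\<dots> = (\<alpha> e \<odot> \<alpha> g) \<odot> c" by (simp only: A.assoc)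
  also have "\<dots> = \<alpha> (e \<cdot> g) \<odot> c" by (simp only: a_hom[OF h(1,2)])
  also have "\<dots> = c" using c h(3) by simp
  finally show ?thesis .
qed

lemma lam_absorb: "\<alpha> (s \<cdot> si s) \<odot> lam s a = lam s a"
proof -
  obtain \<phi>b e where e: "e \<in> EA" and idn: "is_identity_of mA (range (lam s)) (lam s e)"
    using lam_rel unfolding rel_inv_endo_def by blast
  obtain g where g: "g \<in> ES" "e = \<alpha> g" using EA_a[OF e] by blast
  have 1: "\<alpha> (s \<cdot> g \<cdot> si s) \<odot> lam s a = lam s a"
    using idn g lam_a[OF g(1), of s] unfolding is_identity_of_def by auto
  have 2: "s \<cdot> si s \<cdot> (s \<cdot> g \<cdot> si s) = s \<cdot> g \<cdot> si s" by simp
  have 3: "\<alpha> (s \<cdot> si s) \<odot> \<alpha> (s \<cdot> g \<cdot> si s) = \<alpha> (s \<cdot> g \<cdot> si s)"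
    using a_hom[OF S.rr_E[of s] S.conj_E[OF g(1), of s]] 2 by (simp del: S.assoc)
  show ?thesis using 1 3 by (metis A.assoc)
qed

lemma lam_absorb': "\<alpha> (s \<cdot> si s) \<odot> (lam s a \<odot> z) = lam s a \<odot> z"
  by (metis A.assoc lam_absorb)

lemma iv_a[simp]: "e \<in> ES \<Longrightarrow> ai (\<alpha> e) = \<alpha> e" by (simp add: A.iv_idem)

lemma lam_se: "e \<in> ES \<Longrightarrow> lam (s \<cdot> e) c = lam s (\<alpha> e \<odot> c)"
proof -
  assume e: "e \<in> ES"
  have c: "s \<cdot> e \<cdot> si (s \<cdot> e) = s \<cdot> e \<cdot> si s"
    using e by (simp add: S.iv_mult S.iv_idem S.idem_left)
  have "lam s (\<alpha> e \<odot> c) = lam s (lam e c)" by (simp add: lam_E e)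
  also have "\<dots> = \<alpha> (s \<cdot> e \<cdot> si s) \<odot> lam (s \<cdot> e) c \<odot> \<alpha> (s \<cdot> e \<cdot> si s)"
    by (simp add: lam_comp f_se e S.conj_E del: S.assoc)
  also have "\<dots> = \<alpha> (s \<cdot> e \<cdot> si s) \<odot> lam (s \<cdot> e) c"
    using A.central[OF a_E[OF S.conj_E[OF e, of s]], of "lam (s \<cdot> e) c"] S.conj_E[OF e, of s]
    by (simp add: A.idem_left a_idem')
  also have "\<dots> = lam (s \<cdot> e) c" using lam_absorb[of "s \<cdot> e" c] c by (simp del: S.assoc)
  finally show ?thesis by simp
qed

lemma lam_es: "e \<in> ES \<Longrightarrow> lam (e \<cdot> s) c = \<alpha> e \<odot> lam s c"
proof -
  assume e: "e \<in> ES"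
  have eE: "e \<cdot> s \<cdot> si s \<in> ES" using S.EE_mult[OF e S.rr_E[of s]] by simp
  have c: "e \<cdot> s \<cdot> si (e \<cdot> s) = e \<cdot> s \<cdot> si s"
  proof -
    have "e \<cdot> s \<cdot> si (e \<cdot> s) = e \<cdot> (s \<cdot> si s \<cdot> e)" by (simp add: S.iv_mult S.iv_idem e)
    also have "\<dots> = e \<cdot> s \<cdot> si s" using S.idem_comm[OF S.rr_E[of s] e] e by (simp add: S.idem_left)
    finally show ?thesis .
  qed
  have "\<alpha> e \<odot> lam s c = lam e (lam s c)" by (simp add: lam_E e)
  also have "\<dots> = \<alpha> (e \<cdot> s \<cdot> si s) \<odot> lam (e \<cdot> s) c \<odot> \<alpha> (e \<cdot> s \<cdot> si s)"
    by (simp add: lam_comp f_es e eE del: S.assoc)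
  also have "\<dots> = \<alpha> (e \<cdot> s \<cdot> si s) \<odot> lam (e \<cdot> s) c"
    using A.central[OF a_E[OF eE], of "lam (e \<cdot> s) c"] eE
    by (simp add: A.idem_left a_idem' del: S.assoc)
  also have "\<dots> = lam (e \<cdot> s) c" using lam_absorb[of "e \<cdot> s" c] c by (simp del: S.assoc)
  finally show ?thesis by simp
qed

end

context cliff begin
lemma eps_absorb_l: "eps u = e \<Longrightarrow> e \<cdot> u = u" by auto
lemma eps_absorb_l': "eps u = e \<Longrightarrow> e \<cdot> (u \<cdot> z) = u \<cdot> z" by auto
lemma eps_absorb_r: "eps u = e \<Longrightarrow> u \<cdot> e = u" by auto
lemma eps_absorb_r': "eps u = e \<Longrightarrow> u \<cdot> (e \<cdot> z) = u \<cdot> z" by auto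

lemma conj_cancel: "eps F = eps b \<Longrightarrow> F \<cdot> (iv F \<cdot> (b \<cdot> (F \<cdot> iv F))) = b"
  by simp

lemma conj_inj: "eps G = eps a \<Longrightarrow> eps G = eps a' \<Longrightarrow> G \<cdot> a \<cdot> iv G = G \<cdot> a' \<cdot> iv G \<Longrightarrow> a = a'"
proof -
  assume h: "eps G = eps a" "eps G = eps a'" "G \<cdot> a \<cdot> iv G = G \<cdot> a' \<cdot> iv G"
  have "iv G \<cdot> (G \<cdot> a \<cdot> iv G) \<cdot> G = iv G \<cdot> (G \<cdot> a' \<cdot> iv G) \<cdot> G" using h(3) by simp
  then have "eps G \<cdot> (a \<cdot> eps G) = eps G \<cdot> (a' \<cdot> eps G)" by simp
  moreover have "eps G \<cdot> (a \<cdot> eps G) = a" using h(1) by simp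
  moreover have "eps G \<cdot> (a' \<cdot> eps G) = a'" using h(2) by simp
  ultimately show ?thesis by simp
qed
end

context invsem begin
lemma lr1: "g \<in> EE \<Longrightarrow> g \<cdot> (s \<cdot> iv s) = g \<Longrightarrow> g \<cdot> s \<cdot> iv (g \<cdot> s) = g"
proof -
  assume g: "g \<in> EE" "g \<cdot> (s \<cdot> iv s) = g"
  have "g \<cdot> s \<cdot> iv (g \<cdot> s) = g \<cdot> (s \<cdot> iv s \<cdot> g)" by (simp add: iv_mult iv_idem g)
  also have "\<dots> = g \<cdot> (g \<cdot> (s \<cdot> iv s))" using idem_comm[OF rr_E[of s] g(1)] by simp
  also have "\<dots> = g" using g by (simp add: EE_iff)
  finally show ?thesis .
qed
lemma ll1: "g \<in> EE \<Longrightarrow> iv s \<cdot> s \<cdot> g = g \<Longrightarrow> iv (s \<cdot> g) \<cdot> (s \<cdot> g) = g"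
proof -
  assume g: "g \<in> EE" "iv s \<cdot> s \<cdot> g = g"
  have "iv (s \<cdot> g) \<cdot> (s \<cdot> g) = g \<cdot> (iv s \<cdot> s \<cdot> g)" by (simp add: iv_mult iv_idem g)
  also have "\<dots> = g" using g by (simp add: EE_iff)
  finally show ?thesis .
qed
lemma rr_mult: "s \<cdot> t \<cdot> iv (s \<cdot> t) = s \<cdot> (t \<cdot> iv t) \<cdot> iv s" by (simp add: iv_mult)
lemma ll_mult: "iv (s \<cdot> t) \<cdot> (s \<cdot> t) = iv t \<cdot> (iv s \<cdot> s) \<cdot> t" by (simp add: iv_mult)
lemma le_comm: "e \<in> EE \<Longrightarrow> g \<in> EE \<Longrightarrow> g \<cdot> e = g \<Longrightarrow> e \<cdot> g = g" using idem_comm by metis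
end

context main begin

abbreviation Dm where "Dm \<equiv> Dmap mS mA \<alpha>"
abbreviation th where "th \<equiv> thetamap mS mA \<alpha> lam"
abbreviation wm where "wm \<equiv> wmap mS mA \<alpha> f"
abbreviation GG where "GG \<equiv> GS mS"
abbreviation CG where "CG \<equiv> carrier GG"
abbreviation gm (infixl "\<otimes>" 70) where "x \<otimes> y \<equiv> x \<otimes>\<^bsub>GG\<^esub> y"
abbreviation gi where "gi x \<equiv> inv\<^bsub>GG\<^esub> x"

lemma D_mem: "a \<in> Dm x \<longleftrightarrow> (\<exists>s\<in>x. ea a = s \<cdot> si s)"
  unfolding Dmap_def by (auto simp: A.Agrp_iff ea_iff)

lemma D_memI: "s \<in> x \<Longrightarrow> ea a = s \<cdot> si s \<Longrightarrow> a \<in> Dm x"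
  using D_mem by blast

lemma inv_mem: "x \<in> CG \<Longrightarrow> t \<in> gi x \<longleftrightarrow> si t \<in> x"
proof -
  assume x: "x \<in> CG"
  then obtain s0 where s0: "x = S.cls s0" by (auto simp: S.carrier_GG)
  have "t \<in> gi x \<longleftrightarrow> S.sg (si s0) t" by (simp add: s0 S.GG_inv S.mem_cls)
  also have "\<dots> \<longleftrightarrow> S.sg s0 (si t)"
    using S.sg_iv[of "si s0" t] S.sg_iv[of s0 "si t"] by auto
  also have "\<dots> \<longleftrightarrow> si t \<in> x" by (simp add: s0 S.mem_cls)
  finally show ?thesis .
qed

lemma Dinv_mem: "x \<in> CG \<Longrightarrow> a \<in> Dm (gi x) \<longleftrightarrow> (\<exists>s\<in>x. ea a = si s \<cdot> s)"
proof -
  assume x: "x \<in> CG"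
  show ?thesis unfolding D_mem
  proof
    assume "\<exists>t\<in>gi x. ea a = t \<cdot> si t"
    then obtain t where "t \<in> gi x" "ea a = t \<cdot> si t" by blast
    then show "\<exists>s\<in>x. ea a = si s \<cdot> s" using inv_mem[OF x] by (intro bexI[of _ "si t"]) auto
  next
    assume "\<exists>s\<in>x. ea a = si s \<cdot> s"
    then obtain s where "s \<in> x" "ea a = si s \<cdot> s" by blast
    then show "\<exists>t\<in>gi x. ea a = t \<cdot> si t" using inv_mem[OF x] by (intro bexI[of _ "si s"]) auto
  qed
qed

lemma D_down: "x \<in> CG \<Longrightarrow> s \<in> x \<Longrightarrow> g \<in> ES \<Longrightarrow> g \<cdot> (s \<cdot> si s) = g \<Longrightarrow> g \<cdot> s \<in> x \<and> g \<cdot> s \<cdot> si (g \<cdot> s) = g"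
  using S.idl_in[of x s g] S.lr1[of g s] by blast

lemma D_ideal_r: "x \<in> CG \<Longrightarrow> a \<in> Dm x \<Longrightarrow> a \<odot> b \<in> Dm x"
proof -
  assume x: "x \<in> CG" and a: "a \<in> Dm x"
  then obtain s where s: "s \<in> x" "ea a = s \<cdot> si s" by (auto simp: D_mem)
  let ?g = "ea a \<cdot> ea b"
  have gE: "?g \<in> ES" by (simp add: S.EE_mult)
  have "?g \<cdot> (s \<cdot> si s) = ea a \<cdot> (ea b \<cdot> ea a)" using s(2) by simp
  also have "\<dots> = ea a \<cdot> (ea a \<cdot> ea b)" using S.idem_comm[OF ea_E[of b] ea_E[of a]] by simp
  also have "\<dots> = ?g" using S.idem_left[OF ea_E[of a]] by simp
  finally have "?g \<cdot> (s \<cdot> si s) = ?g" .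
  note dd = D_down[OF x s(1) gE this]
  show ?thesis by (rule D_memI[of "?g \<cdot> s"]) (use dd in \<open>simp_all add: ea_mult\<close>)
qed

lemma D_ideal_l: "x \<in> CG \<Longrightarrow> a \<in> Dm x \<Longrightarrow> b \<odot> a \<in> Dm x"
proof -
  assume x: "x \<in> CG" and a: "a \<in> Dm x"
  have "eps a \<odot> (b \<odot> a) = (eps a \<odot> b) \<odot> a" by simp
  also have "\<dots> = (b \<odot> eps a) \<odot> a" by (simp only: A.central[OF A.eps_E[of a], of b])
  finally have c: "eps a \<odot> (b \<odot> a) = b \<odot> a" by simp
  have "a \<odot> (ai a \<odot> (b \<odot> a)) \<in> Dm x" by (rule D_ideal_r[OF x a])
  then show ?thesis using c by simp
qed

lemma D_eps: "a \<in> Dm x \<longleftrightarrow> eps a \<in> Dm x"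
  by (simp add: D_mem ea_def A.eps_idem)

lemma setmul_D: "x \<in> CG \<Longrightarrow> y \<in> CG \<Longrightarrow> setmul mA (Dm x) (Dm y) = Dm x \<inter> Dm y"
proof -
  assume x: "x \<in> CG" and y: "y \<in> CG"
  show ?thesis
  proof
    show "setmul mA (Dm x) (Dm y) \<subseteq> Dm x \<inter> Dm y"
      unfolding setmul_def using D_ideal_r[OF x] D_ideal_l[OF y] by blast
    show "Dm x \<inter> Dm y \<subseteq> setmul mA (Dm x) (Dm y)"
    proof
      fix c assume c: "c \<in> Dm x \<inter> Dm y"
      then have "eps c \<in> Dm y" using D_eps by blast
      moreover have "c = c \<odot> eps c" by simp
      ultimately show "c \<in> setmul mA (Dm x) (Dm y)" unfolding setmul_def using c by blast
    qed
  qed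
qed

lemma D_nonempty: "x \<in> CG \<Longrightarrow> Dm x \<noteq> {}"
proof -
  assume x: "x \<in> CG"
  then obtain s where s: "s \<in> x" using S.class_ne by blast
  have "\<alpha> (s \<cdot> si s) \<in> Dm x" using s by (intro D_memI[of s]) simp_all
  then show ?thesis by blast
qed

lemma D_one: "Dm (\<one>\<^bsub>GG\<^esub>) = UNIV"
  using ea_E by (auto simp: D_mem S.GG_one S.iv_idem S.EE_iff intro!: bexI[of _ "ea _"])

lemma th_eq: "x \<in> CG \<Longrightarrow> s \<in> x \<Longrightarrow> ea a = si s \<cdot> s \<Longrightarrow> th x a = lam s a"
proof -
  assume h: "x \<in> CG" "s \<in> x" "ea a = si s \<cdot> s"
  have u: "(THE t. t \<in> x \<and> \<alpha> (si t \<cdot> t) = eps a) = s"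
  proof (rule the_equality)
    show "s \<in> x \<and> \<alpha> (si s \<cdot> s) = eps a" using h a_ea[of a] by simp
    fix t assume t: "t \<in> x \<and> \<alpha> (si t \<cdot> t) = eps a"
    then have "si t \<cdot> t = si s \<cdot> s" using h(3) ea_iff[of "si t \<cdot> t" a] by simp
    then show "t = s" using S.uniq_l_cls[OF h(1)] t h(2) by blast
  qed
  show ?thesis unfolding thetamap_def A.eps_def[symmetric] u ..
qed

lemma wf_eq: "x \<in> CG \<Longrightarrow> y \<in> CG \<Longrightarrow> s \<in> x \<Longrightarrow> t \<in> x \<otimes> y \<Longrightarrow> ea a = s \<cdot> si s \<Longrightarrow> ea a = t \<cdot> si t
   \<Longrightarrow> wfactor mS mA \<alpha> f x y a = f s (si s \<cdot> t)"
proof -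
  assume h: "x \<in> CG" "y \<in> CG" "s \<in> x" "t \<in> x \<otimes> y" "ea a = s \<cdot> si s" "ea a = t \<cdot> si t"
  have xy: "x \<otimes> y \<in> CG" using S.group_GG h(1,2) by (simp add: monoid.m_closed group.is_monoid)
  have u1: "(THE u. u \<in> x \<and> \<alpha> (u \<cdot> si u) = eps a) = s"
  proof (rule the_equality)
    show "s \<in> x \<and> \<alpha> (s \<cdot> si s) = eps a" using h a_ea[of a] by simp
    fix u assume u: "u \<in> x \<and> \<alpha> (u \<cdot> si u) = eps a"
    then have "u \<cdot> si u = s \<cdot> si s" using h(5) ea_iff[of "u \<cdot> si u" a] by simp
    then show "u = s" using S.uniq_r_cls[OF h(1)] u h(3) by blast
  qed
  have u2: "(THE u. u \<in> x \<otimes> y \<and> \<alpha> (u \<cdot> si u) = eps a) = t"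
  proof (rule the_equality)
    show "t \<in> x \<otimes> y \<and> \<alpha> (t \<cdot> si t) = eps a" using h a_ea[of a] by simp
    fix u assume u: "u \<in> x \<otimes> y \<and> \<alpha> (u \<cdot> si u) = eps a"
    then have "u \<cdot> si u = t \<cdot> si t" using h(6) ea_iff[of "u \<cdot> si u" a] by simp
    then show "u = t" using S.uniq_r_cls[OF xy] u h(4) by blast
  qed
  show ?thesis unfolding wfactor_def A.eps_def[symmetric] u1 u2 Let_def ..
qed

end

context cliff begin

lemma eps_ii[simp]: "eps a \<cdot> eps a = eps a" using eps_E EE_iff by blast
lemma eps_ii'[simp]: "eps a \<cdot> (eps a \<cdot> z) = eps a \<cdot> z" using idem_left eps_E by blast

lemma eps_central: "eps u \<cdot> a = a \<cdot> eps u" by (rule central) simp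
lemma eps_central': "eps u \<cdot> (a \<cdot> z) = a \<cdot> (eps u \<cdot> z)" by (rule central') simp

lemma drop_idem_r: "X = Y \<cdot> e \<Longrightarrow> e \<in> EE \<Longrightarrow> eps X = eps Y \<Longrightarrow> X = Y"
proof -
  assume h: "X = Y \<cdot> e" "e \<in> EE" "eps X = eps Y"
  have "eps X = eps Y \<cdot> e" using h by (simp add: eps_mult eps_idem)
  then have "Y \<cdot> e = Y \<cdot> eps Y \<cdot> e" by simp
  also have "\<dots> = Y \<cdot> eps X" using \<open>eps X = eps Y \<cdot> e\<close> by simp
  also have "\<dots> = Y" using h(3) by simp
  finally show ?thesis using h(1) by simp
qed

lemma drop_idem_l: "X = e \<cdot> Y \<Longrightarrow> e \<in> EE \<Longrightarrow> eps X = eps Y \<Longrightarrow> X = Y"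
  using drop_idem_r central by metis

lemma mono_eq:
  assumes mono: "\<And>a b. a\<in>T \<Longrightarrow> b\<in>T \<Longrightarrow> eps b \<cdot> eps a = eps b \<Longrightarrow> V b = eps b \<cdot> V a"
    and ep: "\<And>a. a \<in> T \<Longrightarrow> eps (V a) = eps a"
    and a: "a \<in> T" and b: "b \<in> T" and e: "eps a = eps b"
  shows "V b = V a"
proof -
  have "V b = eps b \<cdot> V a" using mono[OF a b] e by (simp add: EE_iff[symmetric])
  also have "\<dots> = V a" using ep[OF a] e[symmetric] by (metis eps_left)
  finally show ?thesis .
qed

lemma mult_V:
  assumes idl: "\<And>a b. a\<in>T \<Longrightarrow> a \<cdot> b \<in> T \<and> b \<cdot> a \<in> T"
    and ep: "\<And>a. a \<in> T \<Longrightarrow> eps (V a) = eps a"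
    and mono: "\<And>a b. a\<in>T \<Longrightarrow> b\<in>T \<Longrightarrow> eps b \<cdot> eps a = eps b \<Longrightarrow> V b = eps b \<cdot> V a"
  shows "multiplier m T (\<lambda>a. V a \<cdot> a, \<lambda>a. a \<cdot> V a)"
proof -
  have m1: "V (s \<cdot> t) = eps s \<cdot> (eps t \<cdot> V s)" "V (s \<cdot> t) = eps s \<cdot> (eps t \<cdot> V t)"
    if s: "s \<in> T" and t: "t \<in> T" for s t
  proof -
    have st: "s \<cdot> t \<in> T" using idl s by blast
    have c: "eps s \<cdot> eps t = eps t \<cdot> eps s" by (rule idem_comm) simp_all
    have "eps (s \<cdot> t) \<cdot> eps s = eps (s \<cdot> t)"
      by (simp add: eps_mult c[symmetric])
    from mono[OF s st this] show "V (s \<cdot> t) = eps s \<cdot> (eps t \<cdot> V s)" by (simp add: eps_mult)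
    have "eps (s \<cdot> t) \<cdot> eps t = eps (s \<cdot> t)"
      by (simp add: eps_mult idem_left)
    from mono[OF t st this] show "V (s \<cdot> t) = eps s \<cdot> (eps t \<cdot> V t)" by (simp add: eps_mult)
  qed
  show ?thesis unfolding multiplier_def
  proof (intro conjI ballI)
    fix s assume s: "s \<in> T"
    show "fst (\<lambda>a. V a \<cdot> a, \<lambda>a. a \<cdot> V a) s \<in> T" "snd (\<lambda>a. V a \<cdot> a, \<lambda>a. a \<cdot> V a) s \<in> T"
      using idl[OF s] by auto
  next
    fix s t assume s: "s \<in> T" and t: "t \<in> T"
    have eX: "eps (V s \<cdot> (s \<cdot> t)) = eps s \<cdot> eps t" using ep[OF s] by (simp add: eps_mult)
    show "fst (\<lambda>a. V a \<cdot> a, \<lambda>a. a \<cdot> V a) (s \<cdot> t) = fst (\<lambda>a. V a \<cdot> a, \<lambda>a. a \<cdot> V a) s \<cdot> t"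
    proof -
      have "V (s \<cdot> t) \<cdot> (s \<cdot> t) = eps s \<cdot> (eps t \<cdot> (V s \<cdot> (s \<cdot> t)))" using m1(1)[OF s t] by simp
      also have "\<dots> = eps (V s \<cdot> (s \<cdot> t)) \<cdot> (V s \<cdot> (s \<cdot> t))" using eX by simp
      also have "\<dots> = V s \<cdot> (s \<cdot> t)" by (rule eps_left)
      finally show ?thesis by simp
    qed
    show "snd (\<lambda>a. V a \<cdot> a, \<lambda>a. a \<cdot> V a) (s \<cdot> t) = s \<cdot> snd (\<lambda>a. V a \<cdot> a, \<lambda>a. a \<cdot> V a) t"
    proof -
      have "s \<cdot> t \<cdot> V (s \<cdot> t) = s \<cdot> (t \<cdot> (eps s \<cdot> (eps t \<cdot> V t)))" using m1(2)[OF s t] by simp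
      also have "\<dots> = (s \<cdot> t) \<cdot> eps (s \<cdot> t) \<cdot> V t" by (simp add: eps_mult)
      also have "\<dots> = (s \<cdot> t) \<cdot> V t" by (simp only: eps_right)
      finally show ?thesis by simp
    qed
    show "s \<cdot> fst (\<lambda>a. V a \<cdot> a, \<lambda>a. a \<cdot> V a) t = snd (\<lambda>a. V a \<cdot> a, \<lambda>a. a \<cdot> V a) s \<cdot> t"
    proof -
      have m': "eps s \<cdot> (eps t \<cdot> (V t \<cdot> z)) = eps s \<cdot> (eps t \<cdot> (V s \<cdot> z))" for z
        using arg_cong[OF trans[OF m1(2)[OF s t, symmetric] m1(1)[OF s t]], of "\<lambda>q. q \<cdot> z"] by simp
      have "s \<cdot> (V t \<cdot> t) = s \<cdot> (eps s \<cdot> (V t \<cdot> (eps t \<cdot> t)))" by simp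
      also have "\<dots> = s \<cdot> (eps s \<cdot> (eps t \<cdot> (V t \<cdot> t)))" by (simp only: eps_central'[of t "V t" t])
      also have "\<dots> = s \<cdot> (eps s \<cdot> (eps t \<cdot> (V s \<cdot> t)))" by (simp only: m')
      also have "\<dots> = s \<cdot> (eps s \<cdot> (V s \<cdot> (eps t \<cdot> t)))" by (simp only: eps_central'[of t "V s" t])
      also have "\<dots> = s \<cdot> V s \<cdot> t" by simp
      finally show ?thesis by simp
    qed
  qed
qed

lemma unit_V:
  assumes idl: "\<And>a b. a\<in>T \<Longrightarrow> a \<cdot> b \<in> T \<and> b \<cdot> a \<in> T"
    and ep: "\<And>a. a \<in> T \<Longrightarrow> eps (V a) = eps a"
    and mono: "\<And>a b. a\<in>T \<Longrightarrow> b\<in>T \<Longrightarrow> eps b \<cdot> eps a = eps b \<Longrightarrow> V b = eps b \<cdot> V a"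
  shows "unit_multiplier m T (\<lambda>a. V a \<cdot> a, \<lambda>a. a \<cdot> V a)"
    and "\<And>c. c \<in> T \<Longrightarrow> snd (mltp_inv m T (\<lambda>a. V a \<cdot> a, \<lambda>a. a \<cdot> V a)) c = c \<cdot> iv (V c)"
proof -
  let ?w = "(\<lambda>a. V a \<cdot> a, \<lambda>a. a \<cdot> V a)"
  let ?w' = "(\<lambda>a. iv (V a) \<cdot> a, \<lambda>a. a \<cdot> iv (V a))"
  have ep': "eps (iv (V a)) = eps a" if "a \<in> T" for a using ep[OF that] by simp
  have mono': "iv (V b) = eps b \<cdot> iv (V a)" if "a\<in>T" "b\<in>T" "eps b \<cdot> eps a = eps b" for a b
  proof -
    have "iv (V b) = iv (V a) \<cdot> eps b" using mono[OF that] by (simp add: iv_mult iv_idem)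
    then show ?thesis by (simp add: eps_central)
  qed
  have meq: "V b = V a" if "a \<in> T" "b \<in> T" "eps a = eps b" for a b
    using mono_eq[OF mono ep that] .
  have w'm: "multiplier m T ?w'" by (rule mult_V[OF idl ep' mono'])
  have inv: "mltp_is_inv m T ?w ?w'"
    unfolding mltp_is_inv_def mltp_eq_def mltp_comp_def
  proof (intro conjI w'm ballI)
    fix s assume s: "s \<in> T"
    have e1: "V (iv (V s) \<cdot> s) = V s" using meq[OF s, of "iv (V s) \<cdot> s"] idl[OF s] ep[OF s] by (simp add: eps_mult)
    have e2: "V (s \<cdot> iv (V s)) = V s" using meq[OF s, of "s \<cdot> iv (V s)"] idl[OF s] ep[OF s] by (simp add: eps_mult)
    have e3: "V (V s \<cdot> s) = V s" using meq[OF s, of "V s \<cdot> s"] idl[OF s] ep[OF s] by (simp add: eps_mult)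
    have e4: "V (s \<cdot> V s) = V s" using meq[OF s, of "s \<cdot> V s"] idl[OF s] ep[OF s] by (simp add: eps_mult)
    show "fst (fst ?w \<circ> fst ?w', snd ?w' \<circ> snd ?w) s = fst (id, id) s" using e1 ep[OF s] by simp
    show "snd (fst ?w \<circ> fst ?w', snd ?w' \<circ> snd ?w) s = snd (id, id) s" using e4 ep[OF s] by simp
    show "fst (fst ?w' \<circ> fst ?w, snd ?w \<circ> snd ?w') s = fst (id, id) s" using e3 ep[OF s] by simp
    show "snd (fst ?w' \<circ> fst ?w, snd ?w \<circ> snd ?w') s = snd (id, id) s" using e2 ep[OF s] by simp
  qed
  show "unit_multiplier m T ?w" unfolding unit_multiplier_def
    using mult_V[OF idl ep mono] inv by blast
  fix c assume c: "c \<in> T"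
  have "mltp_is_inv m T ?w (mltp_inv m T ?w)" unfolding mltp_inv_def by (rule someI[of _ ?w'], rule inv)
  then have h: "snd (mltp_inv m T ?w) (snd ?w d) = d" if "d \<in> T" for d
    using that unfolding mltp_is_inv_def mltp_eq_def mltp_comp_def by auto
  let ?d = "c \<cdot> iv (V c)"
  have d: "?d \<in> T" using idl[OF c] by blast
  have "V ?d = V c" using meq[OF c d] ep[OF c] by (simp add: eps_mult)
  then have "snd ?w ?d = c" using ep[OF c] by simp
  then show "snd (mltp_inv m T ?w) c = c \<cdot> iv (V c)" using h[OF d] by simp
qed

end

context eusg begin
lemma hk: "sg s t \<Longrightarrow> s \<cdot> (iv t \<cdot> t) \<cdot> iv s = s \<cdot> iv t"
proof -
  assume st: "sg s t"
  have kE: "s \<cdot> iv t \<in> EE" using sg_rr[OF st] .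
  have "s \<cdot> iv t \<cdot> iv (s \<cdot> iv t) = s \<cdot> iv t"
    using kE iv_idem[OF kE] by (simp add: EE_iff del: assoc)
  then show ?thesis by (simp add: iv_mult)
qed
end

context main begin

lemma lam_surj: "eps b = \<alpha> (s \<cdot> si s) \<Longrightarrow> \<exists>a. ea a = si s \<cdot> s \<and> lam s a = b"
proof -
  assume hb: "eps b = \<alpha> (s \<cdot> si s)"
  define F where "F = f s (si s)"
  have eF: "eps F = \<alpha> (s \<cdot> si s)" unfolding F_def using f_grp[of s "si s"] by simp
  define d where "d = ai F \<odot> b \<odot> F"
  have ed: "eps d = \<alpha> (s \<cdot> si s)" unfolding d_def by (simp add: A.eps_mult eF hb)
  define a where "a = lam (si s) d"
  have eda: "ea d = s \<cdot> si s" using ed ea_iff[of "s \<cdot> si s" d] by simp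
  have "eps a = \<alpha> (si s \<cdot> s)" unfolding a_def eps_lam eda by simp
  then have ha: "ea a = si s \<cdot> s" using ea_iff[of "si s \<cdot> s" a] by simp
  have hb': "eps b = eps F" using hb eF by simp
  have b1: "eps F \<odot> (b \<odot> z) = b \<odot> z" for z using A.eps_left'[of b z] hb' by simp
  have b2: "b \<odot> eps F = b" using A.eps_right[of b] hb' by simp
  have "lam s a = F \<odot> lam (s \<cdot> si s) d \<odot> ai F" by (simp add: a_def lam_comp F_def)
  also have "\<dots> = F \<odot> (eps F \<odot> d) \<odot> ai F" by (simp add: lam_E eF)
  also have "\<dots> = b" by (simp add: d_def b1 b2)
  finally show ?thesis using ha by blast
qed

lemma lam_inj: "ea a = si s \<cdot> s \<Longrightarrow> ea a' = si s \<cdot> s \<Longrightarrow> lam s a = lam s a' \<Longrightarrow> a = a'"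
proof -
  assume h: "ea a = si s \<cdot> s" "ea a' = si s \<cdot> s" "lam s a = lam s a'"
  define G where "G = f (si s) s"
  have eG: "eps G = \<alpha> (si s \<cdot> s)" unfolding G_def using f_grp[of "si s" s] by simp
  have c: "lam (si s) (lam s c) = G \<odot> c \<odot> ai G" if "ea c = si s \<cdot> s" for c
  proof -
    have ec: "eps c = \<alpha> (si s \<cdot> s)" using that a_ea[of c] by simp
    have "lam (si s) (lam s c) = G \<odot> (\<alpha> (si s \<cdot> s) \<odot> c) \<odot> ai G"
      by (simp add: lam_comp lam_E G_def del: A.assoc)
    also have "\<dots> = G \<odot> c \<odot> ai G" using A.eps_left[of c] ec by simp
    finally show ?thesis .
  qed
  have "G \<odot> a \<odot> ai G = G \<odot> a' \<odot> ai G" using c[OF h(1)] c[OF h(2)] h(3) by simp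
  moreover have "eps G = eps a" "eps G = eps a'" using eG h(1,2) a_ea[of a] a_ea[of a'] by simp_all
  ultimately show ?thesis using A.conj_inj by blast
qed

lemma th_props: "x \<in> CG \<Longrightarrow> a \<in> Dm (gi x) \<Longrightarrow>
  \<exists>s\<in>x. ea a = si s \<cdot> s \<and> th x a = lam s a \<and> ea (th x a) = s \<cdot> si s"
proof -
  assume x: "x \<in> CG" and a: "a \<in> Dm (gi x)"
  then obtain s where s: "s \<in> x" "ea a = si s \<cdot> s" using Dinv_mem by blast
  have t: "th x a = lam s a" using th_eq[OF x s] .
  have "eps (lam s a) = \<alpha> (s \<cdot> si s)" unfolding eps_lam s(2) by simp
  then have "ea (lam s a) = s \<cdot> si s" using ea_iff[of "s \<cdot> si s" "lam s a"] by simp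
  then show ?thesis using s t by auto
qed

lemma th_into: "x \<in> CG \<Longrightarrow> a \<in> Dm (gi x) \<Longrightarrow> th x a \<in> Dm x"
  using th_props D_memI by blast

lemma th_inj: "x \<in> CG \<Longrightarrow> inj_on (th x) (Dm (gi x))"
proof (rule inj_onI)
  fix a b assume x: "x \<in> CG" and a: "a \<in> Dm (gi x)" and b: "b \<in> Dm (gi x)" and e: "th x a = th x b"
  obtain s where s: "s \<in> x" "ea a = si s \<cdot> s" "th x a = lam s a" "ea (th x a) = s \<cdot> si s"
    using th_props[OF x a] by blast
  obtain t where t: "t \<in> x" "ea b = si t \<cdot> t" "th x b = lam t b" "ea (th x b) = t \<cdot> si t"
    using th_props[OF x b] by blast
  have "s = t" using S.uniq_r_cls[OF x s(1) t(1)] s(4) t(4) e by simp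
  then show "a = b" using lam_inj[of a s b] s t e by simp
qed

lemma th_surj: "x \<in> CG \<Longrightarrow> b \<in> Dm x \<Longrightarrow> \<exists>s\<in>x. ea b = s \<cdot> si s \<and> (\<exists>a. ea a = si s \<cdot> s \<and> a \<in> Dm (gi x) \<and> th x a = b)"
proof -
  assume x: "x \<in> CG" and b: "b \<in> Dm x"
  then obtain s where s: "s \<in> x" "ea b = s \<cdot> si s" using D_mem by blast
  have "eps b = \<alpha> (s \<cdot> si s)" using s(2) a_ea[of b] by simp
  then obtain a where a: "ea a = si s \<cdot> s" "lam s a = b" using lam_surj by blast
  have "a \<in> Dm (gi x)" using Dinv_mem[OF x] s(1) a(1) by blast
  moreover have "th x a = b" using th_eq[OF x s(1) a(1)] a(2) by simp
  ultimately show ?thesis using s a by blast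
qed

lemma th_hom: "x \<in> CG \<Longrightarrow> a \<in> Dm (gi x) \<Longrightarrow> b \<in> Dm (gi x) \<Longrightarrow> th x (a \<odot> b) = th x a \<odot> th x b"
proof -
  assume x: "x \<in> CG" and a: "a \<in> Dm (gi x)" and b: "b \<in> Dm (gi x)"
  obtain sa where sa: "sa \<in> x" "ea a = si sa \<cdot> sa" "th x a = lam sa a" "ea (th x a) = sa \<cdot> si sa"
    using th_props[OF x a] by blast
  obtain sb where sb: "sb \<in> x" "ea b = si sb \<cdot> sb" "th x b = lam sb b" "ea (th x b) = sb \<cdot> si sb"
    using th_props[OF x b] by blast
  define s where "s = sa \<cdot> ea b"
  have sx: "s \<in> x" unfolding s_def using S.idr_in[OF x sa(1) ea_E] .
  have comm: "ea a \<cdot> ea b = ea b \<cdot> ea a" using S.idem_comm by simp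
  have s1: "si s \<cdot> s = ea a \<cdot> ea b"
  proof -
    have "si s \<cdot> s = ea b \<cdot> (ea a \<cdot> ea b)" unfolding s_def using sa(2)
      by (simp add: S.iv_mult S.iv_idem)
    also have "\<dots> = ea a \<cdot> ea b" using comm S.idem_left[OF ea_E[of b]] by (metis S.assoc)
    finally show ?thesis .
  qed
  have s2: "s = sb \<cdot> ea a"
  proof (rule S.uniq_l_cls[OF x sx S.idr_in[OF x sb(1) ea_E]])
    have "si (sb \<cdot> ea a) \<cdot> (sb \<cdot> ea a) = ea a \<cdot> (ea b \<cdot> ea a)" using sb(2)
      by (simp add: S.iv_mult S.iv_idem)
    also have "\<dots> = ea a \<cdot> ea b" using comm S.idem_left[OF ea_E[of a]] by (metis S.assoc)
    finally show "si s \<cdot> s = si (sb \<cdot> ea a) \<cdot> (sb \<cdot> ea a)" using s1 by simp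
  qed
  define h where "h = s \<cdot> si s"
  have hE: "h \<in> ES" unfolding h_def by simp
  have h1: "h = sa \<cdot> ea b \<cdot> si sa" unfolding h_def s_def by (simp add: S.iv_mult S.iv_idem S.idem_left)
  have h2: "h = sb \<cdot> ea a \<cdot> si sb" unfolding h_def s2 by (simp add: S.iv_mult S.iv_idem S.idem_left)
  have la: "lam s a = \<alpha> h \<odot> th x a"
    unfolding s_def sa(3) lam_se[OF ea_E] lam_mult lam_a[OF ea_E] h1 ..
  have lb: "lam s b = \<alpha> h \<odot> th x b"
    unfolding s2 sb(3) lam_se[OF ea_E] lam_mult lam_a[OF ea_E] h2 ..
  have "th x (a \<odot> b) = lam s (a \<odot> b)" using th_eq[OF x sx] s1 ea_mult by simp
  also have "\<dots> = \<alpha> h \<odot> th x a \<odot> (\<alpha> h \<odot> th x b)" using la lb lam_mult by simp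
  also have "\<dots> = \<alpha> h \<odot> (th x a \<odot> th x b)"
    using A.central'[OF a_E[OF hE], of "th x a" "th x b", symmetric] hE by simp
  also have "\<dots> = th x a \<odot> th x b"
  proof -
    have sg: "S.sg sa sb" using S.same_class[OF x sa(1) sb(1)] .
    have ea1: "eps (th x a) = \<alpha> (sa \<cdot> si sa)" using a_ea[of "th x a"] sa(4) by simp
    have ea2: "eps (th x b) = \<alpha> (sb \<cdot> si sb)" using a_ea[of "th x b"] sb(4) by simp
    have "eps (th x a \<odot> th x b) = \<alpha> (sa \<cdot> si sa) \<odot> \<alpha> (sb \<cdot> si sb)"
      by (simp only: A.eps_mult ea1 ea2)
    also have "\<dots> = \<alpha> (sa \<cdot> si sa \<cdot> (sb \<cdot> si sb))" by (rule a_hom[symmetric]) simp_all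
    also have "\<dots> = \<alpha> h" using S.E1[OF sg] S.hk[OF sg] h1 sa(2) sb(2) by simp
    finally show ?thesis using A.eps_left[of "th x a \<odot> th x b"] by simp
  qed
  finally show ?thesis .
qed

end

context invsem begin
lemma pre: "a \<cdot> b = c \<Longrightarrow> a \<cdot> (b \<cdot> z) = c \<cdot> z"
  by (subst assoc[symmetric]) simp
end

context main begin

abbreviation Wv where "Wv x y a \<equiv> wfactor mS mA \<alpha> f x y a"

lemma xy_in: "x \<in> CG \<Longrightarrow> y \<in> CG \<Longrightarrow> x \<otimes> y \<in> CG"
  using S.group_GG by (simp add: monoid.m_closed group.is_monoid)

lemma W_wit: "x \<in> CG \<Longrightarrow> y \<in> CG \<Longrightarrow> a \<in> Dm x \<Longrightarrow> a \<in> Dm (x \<otimes> y) \<Longrightarrow>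
   \<exists>s t. s \<in> x \<and> t \<in> x \<otimes> y \<and> ea a = s \<cdot> si s \<and> ea a = t \<cdot> si t \<and> Wv x y a = f s (si s \<cdot> t)"
proof -
  assume x: "x \<in> CG" and y: "y \<in> CG" and a1: "a \<in> Dm x" and a2: "a \<in> Dm (x \<otimes> y)"
  obtain s where s: "s \<in> x" "ea a = s \<cdot> si s" using a1 D_mem by blast
  obtain t where t: "t \<in> x \<otimes> y" "ea a = t \<cdot> si t" using a2 D_mem by blast
  show ?thesis using wf_eq[OF x y s(1) t(1) s(2) t(2)] s t by blast
qed

lemma f_te: "e \<in> ES \<Longrightarrow> \<alpha> (p \<cdot> u \<cdot> e \<cdot> si u \<cdot> si p) \<odot> f p (u \<cdot> e) = f p u \<odot> \<alpha> (p \<cdot> u \<cdot> e \<cdot> si u \<cdot> si p)"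
proof -
  assume e: "e \<in> ES"
  have c: "lam p (f u e) \<odot> f p (u \<cdot> e) = f p u \<odot> f (p \<cdot> u) e" by (rule cocycle)
  have 1: "lam p (f u e) = \<alpha> (p \<cdot> u \<cdot> e \<cdot> si u \<cdot> si p)"
    using lam_a[OF S.conj_E[OF e, of u], of p] f_se[OF e, of u] by simp
  have 2: "f (p \<cdot> u) e = \<alpha> (p \<cdot> u \<cdot> e \<cdot> si u \<cdot> si p)"
    using f_se[OF e, of "p \<cdot> u"] by (simp add: S.iv_mult)
  show ?thesis using c 1 2 by simp
qed

lemma W_eps: "x \<in> CG \<Longrightarrow> y \<in> CG \<Longrightarrow> a \<in> Dm x \<Longrightarrow> a \<in> Dm (x \<otimes> y) \<Longrightarrow> eps (Wv x y a) = eps a"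
proof -
  assume h: "x \<in> CG" "y \<in> CG" "a \<in> Dm x" "a \<in> Dm (x \<otimes> y)"
  obtain s t where st: "s \<in> x" "t \<in> x \<otimes> y" "ea a = s \<cdot> si s" "ea a = t \<cdot> si t" "Wv x y a = f s (si s \<cdot> t)"
    using W_wit[OF h] by blast
  let ?g = "ea a"
  have hs: "s \<cdot> si s = ?g" "s \<cdot> (si s \<cdot> z) = ?g \<cdot> z" for z unfolding st(3) by simp_all
  have ht: "t \<cdot> si t = ?g" "t \<cdot> (si t \<cdot> z) = ?g \<cdot> z" for z unfolding st(4) by simp_all
  have gg: "?g \<cdot> ?g = ?g" using S.EE_iff[THEN iffD1, OF ea_E[of a]] .
  have "eps (Wv x y a) = \<alpha> (?g \<cdot> (?g \<cdot> ?g))" unfolding st(5) f_grp by (simp add: S.iv_mult hs ht)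
  then show ?thesis using gg by simp
qed

lemma W_mono: "x \<in> CG \<Longrightarrow> y \<in> CG \<Longrightarrow> a \<in> Dm x \<Longrightarrow> a \<in> Dm (x \<otimes> y) \<Longrightarrow> b \<in> Dm x \<Longrightarrow> b \<in> Dm (x \<otimes> y)
  \<Longrightarrow> ea b \<cdot> ea a = ea b \<Longrightarrow> Wv x y b = \<alpha> (ea b) \<odot> Wv x y a"
proof -
  assume x: "x \<in> CG" and y: "y \<in> CG" and a: "a \<in> Dm x" "a \<in> Dm (x \<otimes> y)"
    and b: "b \<in> Dm x" "b \<in> Dm (x \<otimes> y)" and le: "ea b \<cdot> ea a = ea b"
  have xy: "x \<otimes> y \<in> CG" using xy_in[OF x y] .
  obtain s t where st: "s \<in> x" "t \<in> x \<otimes> y" "ea a = s \<cdot> si s" "ea a = t \<cdot> si t" "Wv x y a = f s (si s \<cdot> t)"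
    using W_wit[OF x y a] by blast
  obtain s' t' where st': "s' \<in> x" "t' \<in> x \<otimes> y" "ea b = s' \<cdot> si s'" "ea b = t' \<cdot> si t'" "Wv x y b = f s' (si s' \<cdot> t')"
    using W_wit[OF x y b] by blast
  define g where "g = ea a"
  define g' where "g' = ea b"
  have gE: "g \<in> ES" and g'E: "g' \<in> ES" unfolding g_def g'_def by simp_all
  have hs: "s \<cdot> si s = g" "s \<cdot> (si s \<cdot> z) = g \<cdot> z" for z unfolding g_def st(3) by simp_all
  have ht: "t \<cdot> si t = g" "t \<cdot> (si t \<cdot> z) = g \<cdot> z" for z unfolding g_def st(4) by simp_all
  have gg: "g \<cdot> g = g" "g \<cdot> (g \<cdot> z) = g \<cdot> z" for z
    using S.EE_iff[THEN iffD1, OF gE] S.idem_left[OF gE] by simp_all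
  have g'g': "g' \<cdot> g' = g'" "g' \<cdot> (g' \<cdot> z) = g' \<cdot> z" for z
    using S.EE_iff[THEN iffD1, OF g'E] S.idem_left[OF g'E] by simp_all
  have c1: "g' \<cdot> g = g'" "g' \<cdot> (g \<cdot> z) = g' \<cdot> z" for z using le S.pre[OF le] unfolding g_def g'_def by simp_all
  have c2a: "g \<cdot> g' = g'" using c1(1) S.idem_comm[OF gE g'E] by simp
  have c2: "g \<cdot> g' = g'" "g \<cdot> (g' \<cdot> z) = g' \<cdot> z" for z using c2a S.pre[OF c2a] by simp_all
  have ivg': "si g' = g'" using S.iv_idem[OF g'E] .
  have gt: "g \<cdot> t = t" "g \<cdot> (t \<cdot> z) = t \<cdot> z" for z unfolding g_def st(4) by simp_all
  have gs: "g \<cdot> s = s" "g \<cdot> (s \<cdot> z) = s \<cdot> z" for z unfolding g_def st(3) by simp_all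
  note R = hs ht gg g'g' c1 c2 ivg' gt gs S.iv_mult
  have s'eq: "s' = g' \<cdot> s"
  proof -
    have "g' \<cdot> (s \<cdot> si s) = g'" using hs c1 by simp
    from D_down[OF x st(1) g'E this] have d1: "g' \<cdot> s \<in> x" and d2: "g' \<cdot> s \<cdot> si (g' \<cdot> s) = g'" by blast+
    have e: "s' \<cdot> si s' = g' \<cdot> s \<cdot> si (g' \<cdot> s)" using d2 st'(3) unfolding g'_def by simp
    show ?thesis using S.uniq_r_cls[OF x st'(1) d1 e] .
  qed
  have t'eq: "t' = g' \<cdot> t"
  proof -
    have "g' \<cdot> (t \<cdot> si t) = g'" using ht c1 by simp
    from D_down[OF xy st(2) g'E this] have d1: "g' \<cdot> t \<in> x \<otimes> y" and d2: "g' \<cdot> t \<cdot> si (g' \<cdot> t) = g'" by blast+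
    have e: "t' \<cdot> si t' = g' \<cdot> t \<cdot> si (g' \<cdot> t)" using d2 st'(4) unfolding g'_def by simp
    show ?thesis using S.uniq_r_cls[OF xy st'(2) d1 e] .
  qed
  define p where "p = g' \<cdot> s"
  define u where "u = si s \<cdot> t"
  define e where "e = si t \<cdot> (g' \<cdot> t)"
  have eE: "e \<in> ES" unfolding e_def using S.conj_E[OF g'E, of "si t"] by simp
  have k1: "si s' \<cdot> t' = u \<cdot> e" unfolding s'eq t'eq u_def e_def by (simp add: R)
  have Wb: "Wv x y b = f p (u \<cdot> e)" using st'(5) k1 s'eq p_def by simp
  have H: "p \<cdot> u \<cdot> e \<cdot> si u \<cdot> si p = g'" unfolding p_def u_def e_def by (simp add: R)
  have eX: "eps (f p (u \<cdot> e)) = \<alpha> g'" unfolding f_grp p_def u_def e_def by (simp add: R)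
  have eY0: "eps (f p u) = \<alpha> (g' \<cdot> (s \<cdot> (si s \<cdot> (t \<cdot> (si t \<cdot> (s \<cdot> (si s \<cdot> g')))))))"
    unfolding f_grp p_def u_def by (simp add: S.iv_mult ivg')
  have eY: "eps (f p u) = \<alpha> g'" unfolding eY0 by (simp add: hs ht c2 g'g')
  have A: "f p (u \<cdot> e) = f p u"
  proof -
    have "\<alpha> g' \<odot> f p (u \<cdot> e) = f p u \<odot> \<alpha> g'" using f_te[OF eE, of p u] H by simp
    then show ?thesis using eX eY A.eps_left[of "f p (u \<cdot> e)"] A.eps_right[of "f p u"] by simp
  qed
  have B: "\<alpha> g' \<odot> f s u = f p u"
  proof -
    have c: "lam g' (f s u) \<odot> f g' (s \<cdot> u) = f g' s \<odot> f (g' \<cdot> s) u" by (rule cocycle)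
    have 1: "lam g' (f s u) = \<alpha> g' \<odot> f s u" by (rule lam_E[OF g'E])
    have 2: "f g' (s \<cdot> u) = \<alpha> g'" unfolding f_es[OF g'E] u_def by (simp add: R)
    have 3: "f g' s = \<alpha> g'" unfolding f_es[OF g'E] by (simp add: R)
    have "\<alpha> g' \<odot> f s u \<odot> \<alpha> g' = \<alpha> g' \<odot> f p u" using c 1 2 3 by (simp add: p_def)
    moreover have "\<alpha> g' \<odot> f s u \<odot> \<alpha> g' = \<alpha> g' \<odot> f s u"
      using A.central[OF a_E[OF g'E], of "f s u"] g'E by (simp flip: A.assoc) (simp)
    moreover have "\<alpha> g' \<odot> f p u = f p u" using eY A.eps_left[of "f p u"] by simp
    ultimately show ?thesis by simp
  qed
  have "Wv x y b = f p u" using Wb A by simp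
  also have "\<dots> = \<alpha> g' \<odot> f s u" using B by simp
  also have "\<dots> = \<alpha> (ea b) \<odot> Wv x y a" using st(5) by (simp add: u_def g'_def)
  finally show ?thesis .
qed

end

context main begin

lemma g_one_r: "x \<in> CG \<Longrightarrow> x \<otimes> \<one>\<^bsub>GG\<^esub> = x" using S.group_GG by (simp add: group.is_monoid monoid.r_one)
lemma g_one_l: "x \<in> CG \<Longrightarrow> \<one>\<^bsub>GG\<^esub> \<otimes> x = x" using S.group_GG by (simp add: group.is_monoid monoid.l_one)
lemma g_one_in: "\<one>\<^bsub>GG\<^esub> \<in> CG" using S.group_GG by (simp add: group.is_monoid monoid.one_closed)
lemma g_inv_in: "x \<in> CG \<Longrightarrow> gi x \<in> CG" using S.group_GG by (simp add: group.inv_closed)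
lemma g_assoc: "x \<in> CG \<Longrightarrow> y \<in> CG \<Longrightarrow> z \<in> CG \<Longrightarrow> x \<otimes> y \<otimes> z = x \<otimes> (y \<otimes> z)"
  using S.group_GG by (simp add: group.is_monoid monoid.m_assoc)
lemma g_inv_mult: "x \<in> CG \<Longrightarrow> y \<in> CG \<Longrightarrow> gi (x \<otimes> y) = gi y \<otimes> gi x"
  using S.group_GG by (simp add: group.inv_mult_group)
lemma g_cancel_l: "x \<in> CG \<Longrightarrow> y \<in> CG \<Longrightarrow> gi x \<otimes> (x \<otimes> y) = y"
  by (simp add: g_assoc[symmetric] g_inv_in group.l_inv[OF S.group_GG] g_one_l)
lemma g_cancel_r: "x \<in> CG \<Longrightarrow> y \<in> CG \<Longrightarrow> x \<otimes> y \<otimes> gi y = x"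
  by (simp add: g_assoc g_inv_in group.r_inv[OF S.group_GG] g_one_r)

lemma setmul_ideals:
  assumes X: "\<And>a b. a \<in> X \<Longrightarrow> a \<odot> b \<in> X \<and> b \<odot> a \<in> X"
    and Y: "\<And>a b. a \<in> Y \<Longrightarrow> a \<odot> b \<in> Y \<and> b \<odot> a \<in> Y"
  shows "setmul mA X Y = X \<inter> Y"
proof
  show "setmul mA X Y \<subseteq> X \<inter> Y" unfolding setmul_def using X Y by blast
  show "X \<inter> Y \<subseteq> setmul mA X Y"
  proof
    fix c assume c: "c \<in> X \<inter> Y"
    have "ai c \<odot> c \<in> Y" using Y c by blast
    then have "eps c \<in> Y" by simp
    moreover have "c = c \<odot> eps c" by simp
    ultimately show "c \<in> setmul mA X Y" unfolding setmul_def using c by blast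
  qed
qed

lemma D_ideal: "x \<in> CG \<Longrightarrow> a \<in> Dm x \<Longrightarrow> a \<odot> b \<in> Dm x \<and> b \<odot> a \<in> Dm x"
  using D_ideal_r D_ideal_l by blast

lemma W_same: "x \<in> CG \<Longrightarrow> y \<in> CG \<Longrightarrow> a \<in> Dm x \<inter> Dm (x \<otimes> y) \<Longrightarrow> b \<in> Dm x \<inter> Dm (x \<otimes> y)
   \<Longrightarrow> eps a = eps b \<Longrightarrow> Wv x y b = Wv x y a"
proof -
  assume x: "x \<in> CG" and y: "y \<in> CG" and a: "a \<in> Dm x \<inter> Dm (x \<otimes> y)" and b: "b \<in> Dm x \<inter> Dm (x \<otimes> y)"
    and e: "eps a = eps b"
  have "ea a = ea b" using e by (metis a_ea a_inj ea_E)
  then have "ea b \<cdot> ea a = ea b" using S.EE_iff ea_E by simp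
  then have "Wv x y b = \<alpha> (ea b) \<odot> Wv x y a" using W_mono[OF x y] a b by blast
  also have "\<dots> = Wv x y a"
  proof -
    have "eps (Wv x y a) = eps b" using W_eps[OF x y] a e by simp
    then show ?thesis using A.eps_left[of "Wv x y a"] by (simp add: a_ea)
  qed
  finally show ?thesis .
qed

lemma W_unit: "x \<in> CG \<Longrightarrow> y \<in> CG \<Longrightarrow>
   unit_multiplier mA (setmul mA (Dm x) (Dm (x \<otimes> y))) (wm x y) \<and>
   (\<forall>c\<in>Dm x \<inter> Dm (x \<otimes> y). snd (mltp_inv mA (setmul mA (Dm x) (Dm (x \<otimes> y))) (wm x y)) c = c \<odot> ai (Wv x y c))"
proof -
  assume x: "x \<in> CG" and y: "y \<in> CG"
  have xy: "x \<otimes> y \<in> CG" using xy_in[OF x y] .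
  let ?T = "Dm x \<inter> Dm (x \<otimes> y)"
  have T: "setmul mA (Dm x) (Dm (x \<otimes> y)) = ?T" using setmul_D[OF x xy] .
  have w: "wm x y = (\<lambda>a. Wv x y a \<odot> a, \<lambda>a. a \<odot> Wv x y a)" by (simp add: wmap_def)
  have idl: "\<And>a b. a\<in>?T \<Longrightarrow> a \<odot> b \<in> ?T \<and> b \<odot> a \<in> ?T" using D_ideal[OF x] D_ideal[OF xy] by blast
  have ep: "\<And>a. a \<in> ?T \<Longrightarrow> eps (Wv x y a) = eps a" using W_eps[OF x y] by blast
  have mono: "Wv x y b = eps b \<odot> Wv x y a" if "a\<in>?T" "b\<in>?T" "eps b \<odot> eps a = eps b" for a b
  proof -
    have "\<alpha> (ea b \<cdot> ea a) = \<alpha> (ea b)" using that(3) by (simp add: a_hom)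
    then have "ea b \<cdot> ea a = ea b" using a_inj S.EE_mult ea_E by blast
    then show ?thesis using W_mono[OF x y] that by simp
  qed
  have u1: "unit_multiplier mA ?T (\<lambda>a. Wv x y a \<odot> a, \<lambda>a. a \<odot> Wv x y a)"
    apply (rule A.unit_V(1)[of ?T "Wv x y"])
      apply (erule idl)
     apply (erule ep)
    apply (erule (2) mono)
    done
  have u2: "snd (mltp_inv mA ?T (\<lambda>a. Wv x y a \<odot> a, \<lambda>a. a \<odot> Wv x y a)) c = c \<odot> ai (Wv x y c)"
    if c: "c \<in> ?T" for c
    apply (rule A.unit_V(2)[of ?T "Wv x y"])
       apply (erule idl)
      apply (erule ep)
     apply (erule (2) mono)
    apply (rule c)
    done
  show ?thesis unfolding T w using u1 u2 by blast
qed

lemma th_one: "th (\<one>\<^bsub>GG\<^esub>) a = a"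
proof -
  have e: "ea a \<in> \<one>\<^bsub>GG\<^esub>" by (simp add: S.GG_one)
  have "ea a = si (ea a) \<cdot> ea a" using S.iv_idem[OF ea_E[of a]] S.EE_iff[THEN iffD1, OF ea_E[of a]] by simp
  then have "th (\<one>\<^bsub>GG\<^esub>) a = lam (ea a) a" using th_eq[OF g_one_in e] by simp
  then show ?thesis by (simp add: lam_E)
qed

lemma th_image: "x \<in> CG \<Longrightarrow> y \<in> CG \<Longrightarrow> th x ` (Dm (gi x) \<inter> Dm y) = Dm x \<inter> Dm (x \<otimes> y)"
proof -
  assume x: "x \<in> CG" and y: "y \<in> CG"
  have xy: "x \<otimes> y \<in> CG" using xy_in[OF x y] .
  show ?thesis
  proof
    show "th x ` (Dm (gi x) \<inter> Dm y) \<subseteq> Dm x \<inter> Dm (x \<otimes> y)"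
    proof
      fix b assume "b \<in> th x ` (Dm (gi x) \<inter> Dm y)"
      then obtain a where a: "a \<in> Dm (gi x)" "a \<in> Dm y" "b = th x a" by blast
      obtain s where s: "s \<in> x" "ea a = si s \<cdot> s" "th x a = lam s a" "ea (th x a) = s \<cdot> si s"
        using th_props[OF x a(1)] by blast
      obtain q where q: "q \<in> y" "ea a = q \<cdot> si q" using a(2) D_mem by blast
      have sq: "s \<cdot> q \<in> x \<otimes> y" using S.mult_in[OF x y s(1) q(1)] .
      have E: "q \<cdot> si q = si s \<cdot> s" using q(2) s(2) by simp
      have qz: "q \<cdot> (si q \<cdot> z) = si s \<cdot> (s \<cdot> z)" for z using S.pre[OF E, of z] by simp
      have "ea b = s \<cdot> q \<cdot> si (s \<cdot> q)" using a(3) s(4) by (simp add: S.iv_mult qz)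
      then have "b \<in> Dm (x \<otimes> y)" using D_memI[OF sq] by blast
      then show "b \<in> Dm x \<inter> Dm (x \<otimes> y)" using th_into[OF x a(1)] a(3) by blast
    qed
    show "Dm x \<inter> Dm (x \<otimes> y) \<subseteq> th x ` (Dm (gi x) \<inter> Dm y)"
    proof
      fix b assume b: "b \<in> Dm x \<inter> Dm (x \<otimes> y)"
      obtain s a where s: "s \<in> x" "ea b = s \<cdot> si s" and a: "ea a = si s \<cdot> s" "a \<in> Dm (gi x)" "th x a = b"
        using th_surj[OF x] b by blast
      obtain t where t: "t \<in> x \<otimes> y" "ea b = t \<cdot> si t" using b D_mem by blast
      have "si s \<cdot> t \<in> gi x \<otimes> (x \<otimes> y)" using S.mult_in[OF g_inv_in[OF x] xy S.inv_in[OF x s(1)] t(1)] .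
      then have q: "si s \<cdot> t \<in> y" using g_cancel_l[OF x y] by simp
      have "ea a = si s \<cdot> t \<cdot> si (si s \<cdot> t)"
        using a(1) s(2) t(2) by (simp add: S.iv_mult) (metis S.assoc S.iv2')
      then have "a \<in> Dm y" using D_memI q by blast
      then show "b \<in> th x ` (Dm (gi x) \<inter> Dm y)" using a by blast
    qed
  qed
qed

end

context main begin

lemma th_conj: "x \<in> CG \<Longrightarrow> y \<in> CG \<Longrightarrow> c \<in> setmul mA (Dm (gi y)) (Dm (gi y \<otimes> gi x)) \<Longrightarrow>
  th x (th y c) = snd (mltp_inv mA (setmul mA (Dm x) (Dm (x \<otimes> y))) (wm x y)) (fst (wm x y) (th (x \<otimes> y) c))"
proof -
  assume x: "x \<in> CG" and y: "y \<in> CG" and c0: "c \<in> setmul mA (Dm (gi y)) (Dm (gi y \<otimes> gi x))"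
  have xy: "x \<otimes> y \<in> CG" using xy_in[OF x y] .
  have gyx: "gi y \<otimes> gi x = gi (x \<otimes> y)" using g_inv_mult[OF x y] by simp
  have c: "c \<in> Dm (gi y)" "c \<in> Dm (gi (x \<otimes> y))"
    using c0 setmul_D[OF g_inv_in[OF y] xy_in[OF g_inv_in[OF y] g_inv_in[OF x]]] gyx by auto
  obtain t where t: "t \<in> y" "ea c = si t \<cdot> t" "th y c = lam t c" "ea (th y c) = t \<cdot> si t"
    using th_props[OF y c(1)] by blast
  obtain v where v: "v \<in> x \<otimes> y" "ea c = si v \<cdot> v" "th (x \<otimes> y) c = lam v c" "ea (th (x \<otimes> y) c) = v \<cdot> si v"
    using th_props[OF xy c(2)] by blast
  define u where "u = v \<cdot> si t"
  have ux: "u \<in> x" unfolding u_def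
    using S.mult_in[OF xy g_inv_in[OF y] v(1) S.inv_in[OF y t(1)]] g_cancel_r[OF x y] by simp
  have E: "si v \<cdot> v = si t \<cdot> t" using t(2) v(2) by simp
  have Ez: "si v \<cdot> (v \<cdot> z) = si t \<cdot> (t \<cdot> z)" for z using S.pre[OF E, of z] by simp
  have ut: "u \<cdot> t = v"
  proof -
    have "u \<cdot> t = v \<cdot> (si t \<cdot> t)" by (simp add: u_def)
    also have "\<dots> = v \<cdot> (si v \<cdot> v)" using E by simp
    finally show ?thesis by simp
  qed
  have uu: "si u \<cdot> u = t \<cdot> si t" unfolding u_def by (simp add: S.iv_mult Ez)
  have uu': "u \<cdot> si u = v \<cdot> si v" unfolding u_def by (simp add: S.iv_mult Ez[symmetric])
  have suv: "si u \<cdot> v = t" unfolding u_def by (simp add: S.iv_mult Ez E)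
  define d where "d = th (x \<otimes> y) c"
  define F where "F = f u t"
  have lhs: "th x (th y c) = F \<odot> d \<odot> ai F"
  proof -
    have "th x (th y c) = lam u (lam t c)" using th_eq[OF x ux, of "th y c"] t(3,4) uu by simp
    also have "\<dots> = F \<odot> d \<odot> ai F" unfolding lam_comp ut F_def d_def v(3) ..
    finally show ?thesis .
  qed
  have dT: "d \<in> Dm x \<inter> Dm (x \<otimes> y)" unfolding d_def using D_memI[OF ux] D_memI[OF v(1)] v(4) uu' by auto
  have Wd: "Wv x y d = F" unfolding F_def using wf_eq[OF x y ux v(1), of d] v(4) uu' suv unfolding d_def by simp
  have Fd: "F \<odot> d \<in> Dm x \<inter> Dm (x \<otimes> y)" using dT D_ideal[OF x] D_ideal[OF xy] by blast
  have eF: "eps F = eps d" using W_eps[OF x y] dT Wd by auto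
  have WFd: "Wv x y (F \<odot> d) = F"
    using W_same[OF x y dT Fd] eF Wd by (simp add: A.eps_mult)
  have "fst (wm x y) d = F \<odot> d" by (simp add: wmap_def Wd)
  moreover have "snd (mltp_inv mA (setmul mA (Dm x) (Dm (x \<otimes> y))) (wm x y)) (F \<odot> d) = F \<odot> d \<odot> ai F"
    using W_unit[OF x y] Fd WFd by auto
  ultimately show ?thesis using lhs unfolding d_def by simp
qed

lemma w_one_l: "x \<in> CG \<Longrightarrow> mltp_eq (Dm x) (wm \<one>\<^bsub>GG\<^esub> x) (id, id)"
  unfolding mltp_eq_def
proof (intro ballI)
  fix a assume x: "x \<in> CG" and a: "a \<in> Dm x"
  define g where "g = ea a"
  have gE: "g \<in> ES" by (simp add: g_def)
  have g1: "g \<in> \<one>\<^bsub>GG\<^esub>" using gE by (simp add: S.GG_one)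
  have gg: "g \<cdot> si g = g" using S.iv_idem[OF gE] S.EE_iff[THEN iffD1, OF gE] by simp
  obtain t where t: "t \<in> x" "ea a = t \<cdot> si t" using a D_mem by blast
  have t1: "t \<in> \<one>\<^bsub>GG\<^esub> \<otimes> x" using t(1) g_one_l[OF x] by simp
  have W: "Wv \<one>\<^bsub>GG\<^esub> x a = f g (si g \<cdot> t)"
    using wf_eq[OF g_one_in x g1 t1] gg t(2) unfolding g_def by simp
  have "si g \<cdot> t = t" using S.iv_idem[OF gE] t(2) unfolding g_def by simp
  then have "Wv \<one>\<^bsub>GG\<^esub> x a = \<alpha> g" using W f_es[OF gE, of t] t(2) S.EE_iff[THEN iffD1, OF gE]
    unfolding g_def by simp
  then have "Wv \<one>\<^bsub>GG\<^esub> x a = eps a" unfolding g_def by simp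
  then show "fst (wm \<one>\<^bsub>GG\<^esub> x) a = fst (id, id) a \<and> snd (wm \<one>\<^bsub>GG\<^esub> x) a = snd (id, id) a"
    by (simp add: wmap_def)
qed

lemma w_one_r: "x \<in> CG \<Longrightarrow> mltp_eq (Dm x) (wm x \<one>\<^bsub>GG\<^esub>) (id, id)"
  unfolding mltp_eq_def
proof (intro ballI)
  fix a assume x: "x \<in> CG" and a: "a \<in> Dm x"
  obtain s where s: "s \<in> x" "ea a = s \<cdot> si s" using a D_mem by blast
  have s1: "s \<in> x \<otimes> \<one>\<^bsub>GG\<^esub>" using s(1) g_one_r[OF x] by simp
  have "Wv x \<one>\<^bsub>GG\<^esub> a = f s (si s \<cdot> s)" using wf_eq[OF x g_one_in s(1) s1 s(2) s(2)] .
  also have "\<dots> = \<alpha> (s \<cdot> si s)" using f_se[of "si s \<cdot> s" s] by simp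
  also have "\<dots> = eps a" using s(2) a_ea[of a] by simp
  finally show "fst (wm x \<one>\<^bsub>GG\<^esub>) a = fst (id, id) a \<and> snd (wm x \<one>\<^bsub>GG\<^esub>) a = snd (id, id) a"
    by (simp add: wmap_def)
qed

end

context main begin

lemma D3: "x \<in> CG \<Longrightarrow> y \<in> CG \<Longrightarrow> z \<in> CG \<Longrightarrow>
  setmul mA (setmul mA (Dm x) (Dm y)) (Dm z) = Dm x \<inter> Dm y \<inter> Dm z"
proof -
  assume x: "x \<in> CG" and y: "y \<in> CG" and z: "z \<in> CG"
  have "setmul mA (Dm x) (Dm y) = Dm x \<inter> Dm y" using setmul_D[OF x y] .
  moreover have "setmul mA (Dm x \<inter> Dm y) (Dm z) = Dm x \<inter> Dm y \<inter> Dm z"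
    by (rule setmul_ideals) (use D_ideal[OF x] D_ideal[OF y] D_ideal[OF z] in blast)+
  ultimately show ?thesis by simp
qed

lemma cocyc: "x \<in> CG \<Longrightarrow> y \<in> CG \<Longrightarrow> z \<in> CG \<Longrightarrow>
  c \<in> setmul mA (setmul mA (Dm (gi x)) (Dm y)) (Dm (y \<otimes> z)) \<Longrightarrow>
  snd (wm x (y \<otimes> z)) (th x (snd (wm y z) c)) = snd (wm (x \<otimes> y) z) (snd (wm x y) (th x c))"
proof -
  assume x: "x \<in> CG" and y: "y \<in> CG" and z: "z \<in> CG"
    and c0: "c \<in> setmul mA (setmul mA (Dm (gi x)) (Dm y)) (Dm (y \<otimes> z))"
  have yz: "y \<otimes> z \<in> CG" and xy: "x \<otimes> y \<in> CG" using xy_in x y z by auto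
  have xyz: "x \<otimes> (y \<otimes> z) \<in> CG" using xy_in[OF x yz] .
  have c: "c \<in> Dm (gi x)" "c \<in> Dm y" "c \<in> Dm (y \<otimes> z)" using c0 D3[OF g_inv_in[OF x] y yz] by auto
  define g where "g = ea c"
  obtain p where p: "p \<in> x" "g = si p \<cdot> p" using Dinv_mem[OF x] c(1) unfolding g_def by blast
  obtain q where q: "q \<in> y" "g = q \<cdot> si q" using D_mem c(2) unfolding g_def by blast
  obtain r where r: "r \<in> y \<otimes> z" "g = r \<cdot> si r" using D_mem c(3) unfolding g_def by blast
  have gr: "g \<cdot> r = r" "g \<cdot> (r \<cdot> w) = r \<cdot> w" for w unfolding r(2) by simp_all
  have gq: "g \<cdot> q = q" "g \<cdot> (q \<cdot> w) = q \<cdot> w" for w unfolding q(2) by simp_all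
  have pz: "si p \<cdot> (p \<cdot> w) = g \<cdot> w" for w unfolding p(2) by simp
  have qz: "q \<cdot> (si q \<cdot> w) = g \<cdot> w" for w unfolding q(2) by simp
  have rz: "r \<cdot> (si r \<cdot> w) = g \<cdot> w" for w unfolding r(2) by simp
  have pg: "p \<cdot> (g \<cdot> w) = p \<cdot> w" for w unfolding p(2) by simp
  define h where "h = p \<cdot> si p"
  define Q where "Q = f q (si q \<cdot> r)"
  have W1: "Wv y z c = Q" unfolding Q_def using wf_eq[OF y z q(1) r(1)] q(2) r(2) unfolding g_def by simp
  have eQ: "eps Q = eps c" using W_eps[OF y z c(2,3)] W1 by simp
  define c1 where "c1 = c \<odot> Q"
  have s1: "snd (wm y z) c = c1" by (simp add: wmap_def W1 c1_def)
  have ec1: "ea c1 = g" unfolding c1_def g_def by (simp add: ea_mult ea_def A.eps_mult eQ S.EE_iff[THEN iffD1])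
  have t1: "th x c1 = lam p c \<odot> lam p Q" using th_eq[OF x p(1), of c1] ec1 p(2) by (simp add: c1_def lam_mult)
  have eth: "ea (lam p b) = h" if "ea b = g" for b
  proof -
    have "eps (lam p b) = \<alpha> h" unfolding eps_lam that h_def p(2) by simp
    then show ?thesis using ea_iff[of h] unfolding h_def by simp
  qed
  have ed1: "ea (th x c1) = h"
  proof -
    have "ea (lam p c \<odot> lam p Q) = ea (lam p c1)" by (simp add: c1_def lam_mult)
    then show ?thesis using t1 eth[OF ec1] by simp
  qed
  have prx: "p \<cdot> r \<in> x \<otimes> (y \<otimes> z)" using S.mult_in[OF x yz p(1) r(1)] .
  have hpr: "h = p \<cdot> r \<cdot> si (p \<cdot> r)" unfolding h_def by (simp add: S.iv_mult rz pg)
  have W2: "Wv x (y \<otimes> z) (th x c1) = f p r"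
    using wf_eq[OF x yz p(1) prx, of "th x c1"] ed1 hpr h_def by (simp add: pz gr)
  have L: "snd (wm x (y \<otimes> z)) (th x (snd (wm y z) c)) = lam p c \<odot> lam p Q \<odot> f p r"
  proof -
    have L0: "snd (wm x (y \<otimes> z)) (th x c1) = th x c1 \<odot> f p r" using W2 by (simp add: wmap_def)
    show ?thesis using L0 s1 t1 by simp
  qed
  have d: "th x c = lam p c" using th_eq[OF x p(1)] p(2) unfolding g_def by simp
  have ed: "ea (lam p c) = h" using eth[of c] unfolding g_def by simp
  have pqx: "p \<cdot> q \<in> x \<otimes> y" using S.mult_in[OF x y p(1) q(1)] .
  have hpq: "h = p \<cdot> q \<cdot> si (p \<cdot> q)" unfolding h_def by (simp add: S.iv_mult qz pg)
  have W3: "Wv x y (lam p c) = f p q"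
    using wf_eq[OF x y p(1) pqx, of "lam p c"] ed hpq h_def by (simp add: pz gq)
  have dT: "lam p c \<in> Dm x \<inter> Dm (x \<otimes> y)" using D_memI[OF p(1)] D_memI[OF pqx] ed hpq h_def by auto
  have eW3: "eps (f p q) = eps (lam p c)" using W_eps[OF x y, of "lam p c"] dT W3 by simp
  define d2 where "d2 = lam p c \<odot> f p q"
  have ed2: "ea d2 = h" unfolding d2_def using ed eW3 by (simp add: ea_mult ea_def A.eps_mult)
  have prx': "p \<cdot> r \<in> x \<otimes> y \<otimes> z" using prx g_assoc[OF x y z] by simp
  have W4: "Wv (x \<otimes> y) z d2 = f (p \<cdot> q) (si q \<cdot> r)"
    using wf_eq[OF xy z pqx prx', of d2] ed2 hpq hpr by (simp add: S.iv_mult pz gr)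
  have R: "snd (wm (x \<otimes> y) z) (snd (wm x y) (th x c)) = lam p c \<odot> f p q \<odot> f (p \<cdot> q) (si q \<cdot> r)"
    unfolding d by (simp add: wmap_def W3 W4[unfolded d2_def])
  have co: "lam p Q \<odot> f p (q \<cdot> (si q \<cdot> r)) = f p q \<odot> f (p \<cdot> q) (si q \<cdot> r)"
    unfolding Q_def by (rule cocycle)
  have "q \<cdot> (si q \<cdot> r) = r" by (simp add: qz gr)
  then have co': "lam p Q \<odot> f p r = f p q \<odot> f (p \<cdot> q) (si q \<cdot> r)" using co by simp
  show ?thesis unfolding L R using co' by simp
qed

end

context main begin

lemma Lmem: "(a, s) \<in> cpL_carrier mS mA \<alpha> \<longleftrightarrow> ea a = s \<cdot> si s"
  by (simp add: cpL_carrier_def ea_iff)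

lemma Tmem: "(a, x) \<in> cpT_carrier GG Dm \<longleftrightarrow> x \<in> CG \<and> a \<in> Dm x"
  by (simp add: cpT_carrier_def)

lemma f_reduce: "f (s \<cdot> (t \<cdot> si t)) (si s \<cdot> (s \<cdot> t)) = f s t"
proof -
  define e where "e = t \<cdot> si t"
  define u where "u = si s \<cdot> (s \<cdot> t)"
  define k where "k = s \<cdot> (t \<cdot> (si t \<cdot> si s))"
  have eE: "e \<in> ES" unfolding e_def by simp
  have kE: "k \<in> ES" unfolding k_def using S.conj_E[OF S.rr_E[of t], of s] by simp
  have cm: "t \<cdot> (si t \<cdot> (si s \<cdot> (s \<cdot> z))) = si s \<cdot> (s \<cdot> (t \<cdot> (si t \<cdot> z)))" for z
    using S.idem_comm'[OF S.rr_E[of t] S.ll_E[of s], of z] by simp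
  have cm0: "t \<cdot> (si t \<cdot> (si s \<cdot> s)) = si s \<cdot> (s \<cdot> (t \<cdot> si t))"
    using S.idem_comm[OF S.rr_E[of t] S.ll_E[of s]] by simp
  have eu: "e \<cdot> u = u" unfolding e_def u_def by (simp add: cm)
  have euz: "e \<cdot> (u \<cdot> z) = u \<cdot> z" for z using S.pre[OF eu] by simp
  have c1: "lam s (f e u) \<odot> f s (e \<cdot> u) = f s e \<odot> f (s \<cdot> e) u" by (rule cocycle)
  have "e \<cdot> u \<cdot> si u \<in> ES" using S.EE_mult[OF eE S.rr_E[of u]] by simp
  then have l1: "lam s (f e u) = \<alpha> k"
    unfolding f_es[OF eE] using lam_a[of "e \<cdot> u \<cdot> si u" s]
    by (simp add: k_def u_def e_def S.iv_mult cm)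
  have f1: "f s e = \<alpha> k" using f_se[OF eE, of s] unfolding k_def e_def by simp
  have epsu: "eps (f s u) = \<alpha> k" unfolding f_grp u_def k_def by (simp add: S.iv_mult cm)
  have epseu: "eps (f (s \<cdot> e) u) = \<alpha> k" unfolding f_grp u_def k_def e_def
    by (simp add: S.iv_mult cm cm0)
  have A: "f s u = f (s \<cdot> e) u"
  proof -
    have "\<alpha> k \<odot> f s u = \<alpha> k \<odot> f (s \<cdot> e) u" using c1 l1 f1 eu by simp
    then show ?thesis using A.eps_left[of "f s u"] A.eps_left[of "f (s \<cdot> e) u"] epsu epseu by simp
  qed
  have c2: "lam s (f (si s \<cdot> s) t) \<odot> f s (si s \<cdot> s \<cdot> t) = f s (si s \<cdot> s) \<odot> f (s \<cdot> (si s \<cdot> s)) t" by (rule cocycle)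
  have l2: "lam s (f (si s \<cdot> s) t) = \<alpha> k"
    unfolding f_es[OF S.ll_E] using lam_a[of "si s \<cdot> s \<cdot> t \<cdot> si t" s] S.EE_mult[OF S.ll_E[of s] S.rr_E[of t]]
    by (simp add: k_def)
  have f2: "f s (si s \<cdot> s) = \<alpha> (s \<cdot> si s)" using f_se[OF S.ll_E[of s], of s] by simp
  have epst: "eps (f s t) = \<alpha> k" unfolding f_grp k_def by simp
  have B: "f s u = f s t"
  proof -
    have "\<alpha> k \<odot> f s u = \<alpha> (s \<cdot> si s) \<odot> f s t" using c2 l2 f2 unfolding u_def by simp
    moreover have "\<alpha> k \<odot> f s u = f s u" using A.eps_left[of "f s u"] epsu by simp
    moreover have "\<alpha> (s \<cdot> si s) \<odot> f s t = f s t"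
      by (rule a_absorb[OF S.rr_E kE _ epst]) (simp add: k_def)
    ultimately show ?thesis by simp
  qed
  show ?thesis using A B unfolding e_def u_def by simp
qed

lemma hom: "(a, s) \<in> cpL_carrier mS mA \<alpha> \<Longrightarrow> (b, t) \<in> cpL_carrier mS mA \<alpha> \<Longrightarrow>
  cpT_mult GG mA Dm th wm (a, S.cls s) (b, S.cls t) = (a \<odot> lam s b \<odot> f s t, S.cls (s \<cdot> t))"
proof -
  assume ha: "(a, s) \<in> cpL_carrier mS mA \<alpha>" and hb: "(b, t) \<in> cpL_carrier mS mA \<alpha>"
  have ha': "ea a = s \<cdot> si s" and hb': "ea b = t \<cdot> si t" using ha hb Lmem by auto
  let ?X = "S.cls s" and ?Y = "S.cls t"
  have X: "?X \<in> CG" and Y: "?Y \<in> CG" by simp_all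
  have sX: "s \<in> ?X" by simp
  obtain a' where a': "ea a' = si s \<cdot> s" "lam s a' = a"
    using lam_surj[of a s] ha' a_ea[of a] by auto
  have a'D: "a' \<in> Dm (gi ?X)" using Dinv_mem[OF X] sX a'(1) by blast
  have tha': "th ?X a' = a" using th_eq[OF X sX a'(1)] a'(2) by simp
  have inv: "the_inv_into (Dm (gi ?X)) (th ?X) a = a'"
    using the_inv_into_f_f[OF th_inj[OF X] a'D] tha' by simp
  define e where "e = t \<cdot> si t"
  have eE: "e \<in> ES" unfolding e_def by simp
  have se: "s \<cdot> e \<in> ?X" using S.idr_in[OF X sX eE] .
  have cm0: "e \<cdot> (si s \<cdot> s) = si s \<cdot> s \<cdot> e" using S.idem_comm[OF eE S.ll_E[of s]] .
  have ll: "si (s \<cdot> e) \<cdot> (s \<cdot> e) = ea (a' \<odot> b)"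
  proof -
    have "si (s \<cdot> e) \<cdot> (s \<cdot> e) = e \<cdot> (si s \<cdot> s) \<cdot> e" by (simp add: S.iv_mult S.iv_idem[OF eE])
    also have "\<dots> = si s \<cdot> s \<cdot> e" using cm0 S.idem_left[OF eE] S.EE_iff[THEN iffD1, OF eE]
      by (metis S.assoc)
    finally show ?thesis by (simp add: ea_mult a'(1) hb' e_def)
  qed
  have thab: "th ?X (a' \<odot> b) = a \<odot> lam s b"
  proof -
    have "th ?X (a' \<odot> b) = lam (s \<cdot> e) (a' \<odot> b)" using th_eq[OF X se] ll by simp
    also have "\<dots> = lam s (\<alpha> e \<odot> (a' \<odot> b))" by (rule lam_se[OF eE])
    also have "\<alpha> e \<odot> (a' \<odot> b) = a' \<odot> b"
    proof -
      have "\<alpha> e \<odot> (a' \<odot> b) = a' \<odot> (\<alpha> e \<odot> b)" by (rule A.central'[OF a_E[OF eE]])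
      also have "\<alpha> e \<odot> b = b" using A.eps_left[of b] hb' a_ea[of b] unfolding e_def by simp
      finally show ?thesis by simp
    qed
    finally show ?thesis by (simp add: lam_mult a'(2))
  qed
  define c where "c = a \<odot> lam s b"
  define k where "k = s \<cdot> (t \<cdot> (si t \<cdot> si s))"
  have ec: "ea c = k"
  proof -
    have "ea (lam s b) = s \<cdot> e \<cdot> si s"
      using ea_iff[of "s \<cdot> e \<cdot> si s" "lam s b"] eps_lam[of s b] hb' S.conj_E[OF eE, of s] unfolding e_def by simp
    then show ?thesis unfolding c_def k_def by (simp add: ea_mult ha' e_def)
  qed
  have stXY: "s \<cdot> t \<in> ?X \<otimes> ?Y" using S.mult_in[OF X Y sX] by simp
  have W: "Wv ?X ?Y c = f s t"
  proof -
    have k1: "ea c = s \<cdot> e \<cdot> si (s \<cdot> e)" using ec unfolding k_def e_def by (simp add: S.iv_mult)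
    have k2: "ea c = s \<cdot> t \<cdot> si (s \<cdot> t)" using ec unfolding k_def by (simp add: S.iv_mult)
    have "Wv ?X ?Y c = f (s \<cdot> e) (si (s \<cdot> e) \<cdot> (s \<cdot> t))" using wf_eq[OF X Y se stXY k1 k2] .
    also have "si (s \<cdot> e) \<cdot> (s \<cdot> t) = si s \<cdot> (s \<cdot> t)"
    proof -
      have "si (s \<cdot> e) \<cdot> (s \<cdot> t) = e \<cdot> (si s \<cdot> s) \<cdot> t" by (simp add: S.iv_mult S.iv_idem[OF eE])
      also have "\<dots> = si s \<cdot> s \<cdot> e \<cdot> t" using cm0 by simp
      also have "\<dots> = si s \<cdot> (s \<cdot> t)" by (simp add: e_def)
      finally show ?thesis .
    qed
    finally show ?thesis using f_reduce unfolding e_def by simp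
  qed
  show ?thesis unfolding cpT_mult_def
    by (simp add: inv thab S.GG_mult wmap_def W[unfolded c_def])
qed

lemma equiv: "equiv_ext (cpL_carrier mS mA \<alpha>) (cpL_mult mS mA lam f) (cpL_i mS mA \<alpha>) (cpL_j mS)
         (cpT_carrier GG Dm) (cpT_mult GG mA Dm th wm) (cpT_i GG) cpT_j"
  unfolding equiv_ext_def
proof (intro exI[of _ "\<lambda>u. (fst u, S.cls (snd u))"] conjI ballI allI)
  let ?mu = "\<lambda>u. (fst u, S.cls (snd u))"
  show "bij_betw ?mu (cpL_carrier mS mA \<alpha>) (cpT_carrier GG Dm)"
    unfolding bij_betw_def
  proof
    show "inj_on ?mu (cpL_carrier mS mA \<alpha>)"
    proof (rule inj_onI)
      fix u v assume u: "u \<in> cpL_carrier mS mA \<alpha>" and v: "v \<in> cpL_carrier mS mA \<alpha>" and e: "?mu u = ?mu v"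
      obtain a s where us: "u = (a, s)" by (cases u)
      obtain b t where vt: "v = (b, t)" by (cases v)
      have ab: "a = b" and st: "S.sg s t" using e us vt S.cls_eq by auto
      have "s \<cdot> si s = t \<cdot> si t" using u v us vt ab Lmem by auto
      then show "u = v" using S.uniq_r[OF st] us vt ab by simp
    qed
    show "?mu ` cpL_carrier mS mA \<alpha> = cpT_carrier GG Dm"
    proof
      show "?mu ` cpL_carrier mS mA \<alpha> \<subseteq> cpT_carrier GG Dm"
      proof
        fix w assume "w \<in> ?mu ` cpL_carrier mS mA \<alpha>"
        then obtain a s where as: "(a, s) \<in> cpL_carrier mS mA \<alpha>" "w = (a, S.cls s)" by auto
        then have "a \<in> Dm (S.cls s)" using D_memI[of s "S.cls s" a] Lmem by simp
        then show "w \<in> cpT_carrier GG Dm" using as Tmem by simp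
      qed
      show "cpT_carrier GG Dm \<subseteq> ?mu ` cpL_carrier mS mA \<alpha>"
      proof
        fix w assume "w \<in> cpT_carrier GG Dm"
        then obtain a x where ax: "w = (a, x)" "x \<in> CG" "a \<in> Dm x" using Tmem by (cases w) auto
        then obtain s where s: "s \<in> x" "ea a = s \<cdot> si s" using D_mem by blast
        have "x = S.cls s" using S.in_class[OF ax(2) s(1)] .
        moreover have "(a, s) \<in> cpL_carrier mS mA \<alpha>" using s(2) Lmem by simp
        ultimately show "w \<in> ?mu ` cpL_carrier mS mA \<alpha>" using ax(1) by force
      qed
    qed
  qed
next
  fix u v assume u: "u \<in> cpL_carrier mS mA \<alpha>" and v: "v \<in> cpL_carrier mS mA \<alpha>"
  obtain a s where us: "u = (a, s)" by (cases u)
  obtain b t where vt: "v = (b, t)" by (cases v)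
  show "(fst (cpL_mult mS mA lam f u v), S.cls (snd (cpL_mult mS mA lam f u v))) =
        cpT_mult GG mA Dm th wm (fst u, S.cls (snd u)) (fst v, S.cls (snd v))"
    using hom[of a s b t] u v us vt by (simp add: cpL_mult_def)
next
  fix a
  have "the_inv_into ES \<alpha> (a \<odot> ai a) = ea a" by (simp add: ea_def)
  then show "(fst (cpL_i mS mA \<alpha> a), S.cls (snd (cpL_i mS mA \<alpha> a))) = cpT_i GG a"
    by (simp add: cpL_i_def cpT_i_def S.GG_one_cls)
next
  fix u assume "u \<in> cpL_carrier mS mA \<alpha>"
  show "cpT_j (fst u, S.cls (snd u)) = cpL_j mS u" by (simp add: cpT_j_def cpL_j_def)
qed

end

context main begin

lemma tpa: "twisted_partial_action (GS mS) mA (Dmap mS mA \<alpha>) (thetamap mS mA \<alpha> lam) (wmap mS mA \<alpha> f)"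
proof -
  have c1: "group GG" by (rule S.group_GG)
  have c2: "\<forall>x\<in>CG. sg_ideal mA (Dm x) \<and> iso_on mA (th x) (Dm (gi x)) (Dm x)"
  proof
    fix x assume x: "x \<in> CG"
    have "sg_ideal mA (Dm x)" unfolding sg_ideal_def using D_nonempty[OF x] D_ideal[OF x] by blast
    moreover have "th x ` Dm (gi x) = Dm x"
    proof
      show "th x ` Dm (gi x) \<subseteq> Dm x" using th_into[OF x] by blast
      show "Dm x \<subseteq> th x ` Dm (gi x)"
      proof
        fix b assume "b \<in> Dm x"
        then obtain a where "a \<in> Dm (gi x)" "th x a = b" using th_surj[OF x] by blast
        then show "b \<in> th x ` Dm (gi x)" by blast
      qed
    qed
    moreover have "inj_on (th x) (Dm (gi x))" by (rule th_inj[OF x])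
    ultimately show "sg_ideal mA (Dm x) \<and> iso_on mA (th x) (Dm (gi x)) (Dm x)"
      unfolding iso_on_def bij_betw_def using th_hom[OF x] by blast
  qed
  have c3: "\<forall>x\<in>CG. \<forall>y\<in>CG. unit_multiplier mA (setmul mA (Dm x) (Dm (x \<otimes> y))) (wm x y)"
    using W_unit by blast
  have c4: "\<forall>x\<in>CG. setmul mA (Dm x) (Dm x) = Dm x" using setmul_D by auto
  have c5: "\<forall>x\<in>CG. \<forall>y\<in>CG. setmul mA (Dm x) (Dm y) = setmul mA (Dm y) (Dm x)" using setmul_D by auto
  have c6: "Dm \<one>\<^bsub>GG\<^esub> = UNIV" by (rule D_one)
  have c7: "\<forall>a. th \<one>\<^bsub>GG\<^esub> a = a" using th_one by blast
  have c8: "\<forall>x\<in>CG. \<forall>y\<in>CG. th x ` setmul mA (Dm (gi x)) (Dm y) = setmul mA (Dm x) (Dm (x \<otimes> y))"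
    using th_image setmul_D g_inv_in xy_in by auto
  have c9: "\<forall>x\<in>CG. \<forall>y\<in>CG. \<forall>s\<in>setmul mA (Dm (gi y)) (Dm (gi y \<otimes> gi x)).
          th x (th y s) = snd (mltp_inv mA (setmul mA (Dm x) (Dm (x \<otimes> y))) (wm x y)) (fst (wm x y) (th (x \<otimes> y) s))"
    using th_conj by blast
  have c10: "\<forall>x\<in>CG. mltp_eq (Dm x) (wm \<one>\<^bsub>GG\<^esub> x) (id, id) \<and> mltp_eq (Dm x) (wm x \<one>\<^bsub>GG\<^esub>) (id, id)"
    using w_one_l w_one_r by blast
  have c11: "\<forall>x\<in>CG. \<forall>y\<in>CG. \<forall>z\<in>CG. \<forall>s\<in>setmul mA (setmul mA (Dm (gi x)) (Dm y)) (Dm (y \<otimes> z)).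
          snd (wm x (y \<otimes> z)) (th x (snd (wm y z) s)) = snd (wm (x \<otimes> y) z) (snd (wm x y) (th x s))"
    using cocyc by blast
  show ?thesis unfolding twisted_partial_action_def
    using c1 c2 c3 c4 c5 c6 c7 c8 c9 c10 c11 by (intro conjI) assumption+
qed

lemma main_thm: "twisted_partial_action (GS mS) mA (Dmap mS mA \<alpha>) (thetamap mS mA \<alpha> lam) (wmap mS mA \<alpha> f)
     \<and> equiv_ext (cpL_carrier mS mA \<alpha>) (cpL_mult mS mA lam f) (cpL_i mS mA \<alpha>) (cpL_j mS)
         (cpT_carrier (GS mS) (Dmap mS mA \<alpha>))
         (cpT_mult (GS mS) mA (Dmap mS mA \<alpha>) (thetamap mS mA \<alpha> lam) (wmap mS mA \<alpha> f))
         (cpT_i (GS mS)) cpT_j"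
  using tpa equiv by blast

end

theorem proposition6p11:
  fixes mS :: "'s \<Rightarrow> 's \<Rightarrow> 's" and mA :: "'a \<Rightarrow> 'a \<Rightarrow> 'a"
    and \<alpha> :: "'s \<Rightarrow> 'a" and lam :: "'s \<Rightarrow> 'a \<Rightarrow> 'a" and f :: "'s \<Rightarrow> 's \<Rightarrow> 'a"
  assumes "inverse_semigroup mS" and "E_unitary mS"
    and "semilattice_of_groups mA"
    and "sieben_twisted_module mS mA \<alpha> lam f"
  shows "twisted_partial_action (GS mS) mA (Dmap mS mA \<alpha>) (thetamap mS mA \<alpha> lam) (wmap mS mA \<alpha> f)
     \<and> equiv_ext (cpL_carrier mS mA \<alpha>) (cpL_mult mS mA lam f) (cpL_i mS mA \<alpha>) (cpL_j mS)
         (cpT_carrier (GS mS) (Dmap mS mA \<alpha>))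
         (cpT_mult (GS mS) mA (Dmap mS mA \<alpha>) (thetamap mS mA \<alpha> lam) (wmap mS mA \<alpha> f))
         (cpT_i (GS mS)) cpT_j"
proof -
  have sl: "inverse_semigroup mA" "\<And>e a. e \<in> idems mA \<Longrightarrow> mA e a = mA a e"
    using assms(3) unfolding semilattice_of_groups_def by auto
  interpret main mS mA \<alpha> lam f
  proof (unfold_locales)
    show "inverse_semigroup mS" by (rule assms(1))
    show "E_unitary mS" by (rule assms(2))
    show "inverse_semigroup mA" by (rule sl(1))
    show "\<And>e a. e \<in> idems mA \<Longrightarrow> mA e a = mA a e" by (rule sl(2))
    show "sieben_twisted_module mS mA \<alpha> lam f" by (rule assms(4))
  qed
  show ?thesis by (rule main_thm)
qed


end
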